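(* Let $\Gamma=(V,E)$ be a finite simple graph on $V=\{1,\dots,n\}$ with clique number $\omega$, and let $\{T_j\}_{j=1}^n$ be a $\Gamma$-family on a Hilbert space $\mathcal{H}$ satisfying the weak Brehmer's condition. For $0\le r<1$ define the Cauchy transform $C_{r,T}:\mathcal{H}\to\ell^2(A_\Gamma^+)\otimes\mathcal{H}$ by $C_{r,T}h=\sum_{p\in A_\Gamma^+}\delta_p\otimes r^{|p|}T_p^*h$. Then $C_{r,T}$ is a well-defined bounded operator for every $0\le r<1$, and for each $h\in\mathcal{H}$, \[\|C_{r,T}h\|^2\leq\frac{1}{(1-r^2)^{\omega}}\|h\|^2.\]
   Context: $A_\Gamma^+=\langle e_1,\dots,e_n : e_ie_j=e_je_i \text{ if } ij\in E\rangle$ is the right-angled Artin monoid; $|p|$ is the number of generators in any expression of $p$ ($|1|=0$). $\{\delta_p:p\in A_\Gamma^+\}$ is the canonical orthonormal basis of $\ell^2(A_\Gamma^+)$. A $\Gamma$-family is a family of contractions $T_1,\dots,T_n$ on $\mathcal{H}$ with $T_iT_j=T_jT_i$ whenever $ij\in E$; it defines a unital representation $p\mapsto T_p$ with $T_{e_i}=T_i$. For a finite $U\subset A_\Gamma^+$, $\vee U=\infty$ if $\bigcap_{p\in U}pA_\Gamma^+=\emptyset$, otherwise $\vee U$ is the unique $r$ with $\bigcap_{p\in U}pA_\Gamma^+=rA_\Gamma^+$ ($\vee\emptyset=1$); $T_{\vee U}:=0$ if $\vee U=\infty$. For a set $U$ of generators, $\vee U<\infty$ iff the vertices form a clique, and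 then $\vee U=\prod_{e_i\in U}e_i$. The complement graph $\Gamma^c$ has vertex set $V$ and edges $\{ij:i\ne j,\ ij\notin E\}$. Weak Brehmer's condition: for each vertex set $V_i$ of a connected component of $\Gamma^c$, with $\Gamma_i=\Gamma|_{V_i}$, and each clique $W$ of $\Gamma_i$ (including $\emptyset$), with $N_{\Gamma_i}(W)=\{e_j: j\in V_i,\ jk\in E\ \forall k\in W\}$, one has $\sum_{U\subseteq N_{\Gamma_i}(W)}(-1)^{|U|}T_{\vee U}T_{\vee U}^*\ge0$. *)

theory Defs
  imports "HOL-Analysis.Analysis"
begin

text \<open>Graph: vertex set V = {1..n}, adjacency E (assumed symmetric, irreflexive).\<close>

definition is_clique :: "(nat \<Rightarrow> nat \<Rightarrow> bool) \<Rightarrow> nat set \<Rightarrow> bool" where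
  "is_clique E W \<longleftrightarrow> (\<forall>i\<in>W. \<forall>j\<in>W. i \<noteq> j \<longrightarrow> E i j)"

definition clique_number :: "nat \<Rightarrow> (nat \<Rightarrow> nat \<Rightarrow> bool) \<Rightarrow> nat" where
  "clique_number n E = Max (card ` {W. W \<subseteq> {1..n} \<and> is_clique E W})"

definition compl_edge :: "nat \<Rightarrow> (nat \<Rightarrow> nat \<Rightarrow> bool) \<Rightarrow> nat \<Rightarrow> nat \<Rightarrow> bool" where
  "compl_edge n E i j \<longleftrightarrow> i \<in> {1..n} \<and> j \<in> {1..n} \<and> i \<noteq> j \<and> \<not> E i j"

definition compl_components :: "nat \<Rightarrow> (nat \<Rightarrow> nat \<Rightarrow> bool) \<Rightarrow> nat set set" where
  "compl_components n E = (\<lambda>i. {j. (compl_edge n E)\<^sup>*\<^sup>* i j}) ` {1..n}"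

definition nbhd :: "(nat \<Rightarrow> nat \<Rightarrow> bool) \<Rightarrow> nat set \<Rightarrow> nat set \<Rightarrow> nat set" where
  "nbhd E Vi W = {j \<in> Vi. \<forall>k\<in>W. E j k}"

text \<open>Right-angled Artin monoid: words over {1..n} modulo commuting adjacent
  letters that are joined by an edge.\<close>

inductive swap_step :: "(nat \<Rightarrow> nat \<Rightarrow> bool) \<Rightarrow> nat list \<Rightarrow> nat list \<Rightarrow> bool" for E where
  "E a b \<Longrightarrow> swap_step E (xs @ [a, b] @ ys) (xs @ [b, a] @ ys)"

definition word_equiv :: "(nat \<Rightarrow> nat \<Rightarrow> bool) \<Rightarrow> nat list \<Rightarrow> nat list \<Rightarrow> bool" where
  "word_equiv E = (symclp (swap_step E))\<^sup>*\<^sup>*"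

definition raam :: "nat \<Rightarrow> (nat \<Rightarrow> nat \<Rightarrow> bool) \<Rightarrow> nat list set set" where
  "raam n E = (\<lambda>w. {v. word_equiv E w v}) ` {w. set w \<subseteq> {1..n}}"

definition rep :: "nat list set \<Rightarrow> nat list" where
  "rep p = (SOME w. w \<in> p)"

definition mlen :: "nat list set \<Rightarrow> nat" where
  "mlen p = length (rep p)"

definition word_op :: "(nat \<Rightarrow> 'a \<Rightarrow> 'a) \<Rightarrow> nat list \<Rightarrow> 'a \<Rightarrow> 'a" where
  "word_op T w = foldr (\<lambda>i f. T i \<circ> f) w id"

definition mon_op :: "(nat \<Rightarrow> 'a \<Rightarrow> 'a) \<Rightarrow> nat list set \<Rightarrow> 'a \<Rightarrow> 'a" where
  "mon_op T p = word_op T (rep p)"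

definition join_op :: "(nat \<Rightarrow> nat \<Rightarrow> bool) \<Rightarrow> (nat \<Rightarrow> 'a::real_vector \<Rightarrow> 'a) \<Rightarrow> nat set \<Rightarrow> 'a \<Rightarrow> 'a" where
  "join_op E T U = (if is_clique E U then word_op T (sorted_list_of_set U) else (\<lambda>_. 0))"

definition positive_op :: "('a::real_inner \<Rightarrow> 'a) \<Rightarrow> bool" where
  "positive_op A \<longleftrightarrow> (\<forall>h. 0 \<le> inner (A h) h)"

definition weak_brehmer :: "nat \<Rightarrow> (nat \<Rightarrow> nat \<Rightarrow> bool) \<Rightarrow> (nat \<Rightarrow> 'a::real_inner \<Rightarrow> 'a) \<Rightarrow> bool" where
  "weak_brehmer n E T \<longleftrightarrow>
     (\<forall>Vi \<in> compl_components n E. \<forall>W. W \<subseteq> Vi \<and> is_clique E W \<longrightarrow>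
        positive_op (\<lambda>h. \<Sum>U \<in> Pow (nbhd E Vi W).
            (-1) ^ card U *\<^sub>R join_op E T U (adjoint (join_op E T U) h)))"

definition gamma_family :: "nat \<Rightarrow> (nat \<Rightarrow> nat \<Rightarrow> bool) \<Rightarrow> (nat \<Rightarrow> 'a::real_normed_vector \<Rightarrow> 'a) \<Rightarrow> bool" where
  "gamma_family n E T \<longleftrightarrow>
     (\<forall>i\<in>{1..n}. bounded_linear (T i) \<and> (\<forall>x. norm (T i x) \<le> norm x)) \<and>
     (\<forall>i\<in>{1..n}. \<forall>j\<in>{1..n}. E i j \<longrightarrow> T i \<circ> T j = T j \<circ> T i)"

text \<open>Cauchy transform, as an element of l2(A_Gamma^+; H) = l2(A_Gamma^+) (x) H:
  p \<mapsto> r^|p| T_p^* h.\<close>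

definition cauchy_transform :: "real \<Rightarrow> (nat \<Rightarrow> 'a::real_inner \<Rightarrow> 'a) \<Rightarrow> 'a \<Rightarrow> nat list set \<Rightarrow> 'a" where
  "cauchy_transform r T h p = (r ^ mlen p) *\<^sub>R adjoint (mon_op T p) h"

end

theory Submission
  imports Defs "HOL-Analysis.Analysis"
begin


lemma min_norm_exists:
  fixes f :: "'a::{real_inner,complete_space} \<Rightarrow> real"
  assumes bl: "bounded_linear f" and ne: "\<exists>x. f x = 1"
  shows "\<exists>z. f z = 1 \<and> (\<forall>x. f x = 1 \<longrightarrow> norm z \<le> norm x)"
proof -
  interpret bounded_linear f by fact
  define M where "M = {x. f x = 1}"
  define \<delta> where "\<delta> = Inf ((\<lambda>x. norm x ^ 2) ` M)"
  have Mne: "M \<noteq> {}" using ne by (auto simp: M_def)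
  have bdd: "bdd_below ((\<lambda>x. norm x ^ 2) ` M)" by (rule bdd_belowI[of _ 0]) auto
  have dle: "\<delta> \<le> norm x ^ 2" if "x \<in> M" for x
    unfolding \<delta>_def using bdd that by (simp add: cInf_lower)
  have "\<exists>x\<in>M. norm x ^ 2 < \<delta> + e" if "e > 0" for e
  proof -
    have "Inf ((\<lambda>x. norm x ^ 2) ` M) < \<delta> + e" using that by (simp add: \<delta>_def)
    then obtain t where "t \<in> (\<lambda>x. norm x ^ 2) ` M" "t < \<delta> + e"
      using cInf_lessD[of "(\<lambda>x. norm x ^ 2) ` M"] Mne by blast
    then show ?thesis by auto
  qed
  then have "\<forall>k::nat. \<exists>x\<in>M. norm x ^ 2 < \<delta> + 1/(Suc k)" by simp
  then obtain X where X: "\<And>k. X k \<in> M" "\<And>k. norm (X k) ^ 2 < \<delta> + 1/(Suc k)"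
    by metis
  have para: "norm (a - b)^2 = 2*norm a^2 + 2*norm b^2 - 4*norm ((1/2) *\<^sub>R (a+b))^2" for a b :: 'a
    by (simp add: power2_norm_eq_inner inner_diff inner_add algebra_simps)
  have mid: "(1/2) *\<^sub>R (X k + X l) \<in> M" for k l
    using X(1)[of k] X(1)[of l] by (simp add: M_def add scale)
  have dist_sq: "norm (X k - X l)^2 \<le> 2/(Suc k) + 2/(Suc l)" for k l
  proof -
    have "norm (X k - X l)^2 = 2*norm (X k)^2 + 2*norm (X l)^2 - 4*norm ((1/2) *\<^sub>R (X k + X l))^2"
      by (rule para)
    also have "\<dots> \<le> 2*(\<delta> + 1/(Suc k)) + 2*(\<delta> + 1/(Suc l)) - 4*\<delta>"
      using X(2)[of k] X(2)[of l] dle[OF mid[of k l]]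
      by (smt (verit) mult_left_mono)
    finally show ?thesis by simp
  qed
  have cau: "Cauchy X"
  proof (rule metric_CauchyI)
    fix e :: real assume e: "e > 0"
    obtain N :: nat where N: "4 / e^2 < real N" using reals_Archimedean2 by blast
    have "0 < e^2" using e by simp
    have "4 / e^2 < real (Suc N)" using N by simp
    then have "4 < real (Suc N) * e^2" using \<open>0 < e^2\<close> by (simp add: divide_less_eq)
    then have N': "4 / (Suc N) < e^2" by (simp add: divide_less_eq mult.commute)
    show "\<exists>M. \<forall>m\<ge>M. \<forall>n\<ge>M. dist (X m) (X n) < e"
    proof (intro exI allI impI)
      fix m n assume mn: "N \<le> m" "N \<le> n"
      have a: "2/(Suc m) \<le> 2/(Suc N)" using mn by (simp add: frac_le)
      have b: "2/(Suc n) \<le> 2/(Suc N)" using mn by (simp add: frac_le)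
      have "norm (X m - X n)^2 < e^2" using dist_sq[of m n] a b N' by linarith
      then have "norm (X m - X n) < e" using e power_less_imp_less_base[of "norm (X m - X n)" 2 e] by simp
      then show "dist (X m) (X n) < e" by (simp add: dist_norm)
    qed
  qed
  then obtain z where z: "X \<longlonglongrightarrow> z" using convergent_def complete_UNIV Cauchy_convergent by blast
  have l1: "(\<lambda>k. f (X k)) \<longlonglongrightarrow> f z" using z by (intro tendsto)
  have eq1: "(\<lambda>k. f (X k)) = (\<lambda>k. 1)" using X(1) by (auto simp: M_def)
  have l2: "(\<lambda>k. f (X k)) \<longlonglongrightarrow> 1" unfolding eq1 by simp
  have fz: "f z = 1" using l1 l2 by (rule LIMSEQ_unique)
  have l3: "(\<lambda>k. norm (X k)^2) \<longlonglongrightarrow> norm z ^2" using z by (intro tendsto_intros)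
  have l4: "(\<lambda>k. \<delta> + 1/(Suc k)) \<longlonglongrightarrow> \<delta> + 0"
    by (intro tendsto_intros LIMSEQ_inverse_real_of_nat[unfolded inverse_eq_divide] )
  have l5: "\<exists>N. \<forall>k\<ge>N. norm (X k)^2 \<le> \<delta> + 1/(Suc k)"
    using X(2) less_imp_le by blast
  have nz: "norm z ^2 \<le> \<delta> + 0" using l3 l4 l5 by (rule LIMSEQ_le)
  have zx: "norm z ^ 2 \<le> norm x ^ 2" if "f x = 1" for x
  proof -
    have "x \<in> M" using that by (simp add: M_def)
    then show ?thesis using dle[of x] nz by linarith
  qed
  have "norm z \<le> norm x" if "f x = 1" for x using zx[OF that] power2_le_imp_le[of "norm z" "norm x"] by simp
  then show ?thesis using fz by blast
qed

lemma quad0: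
  fixes a K :: real
  assumes h: "\<And>t. 0 \<le> 2*t*a + t^2*K" and K0: "K \<ge> 0"
  shows "a = 0"
proof -
  define e where "e = 1 / (K + 1)"
  have e0: "e > 0" using K0 by (simp add: e_def)
  have eK: "e * K < 1" using K0 by (simp add: e_def divide_less_eq)
  have "0 \<le> 2*(-a*e)*a + (-a*e)^2*K" by (rule h)
  also have "\<dots> = a^2 * e * (e*K - 2)" by (simp add: power2_eq_square algebra_simps)
  finally have "0 \<le> a^2 * e * (e*K - 2)" .
  moreover have "e*K - 2 < 0" using eK by simp
  ultimately have "a^2 * e \<le> 0" by (smt (verit) mult_nonneg_nonneg mult_nonpos_nonneg zero_le_mult_iff)
  then have "a^2 \<le> 0" using e0 by (simp add: mult_le_0_iff)
  then show ?thesis by simp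
qed
lemma riesz:
  fixes f :: "'a::{real_inner,complete_space} \<Rightarrow> real"
  assumes bl: "bounded_linear f"
  shows "\<exists>y. \<forall>x. f x = inner x y"
proof (cases "\<forall>x. f x = 0")
  case True then show ?thesis by (intro exI[of _ 0]) simp
next
  case False
  interpret bounded_linear f by fact
  from False obtain x0 where x0: "f x0 \<noteq> 0" by blast
  have "f ((1 / f x0) *\<^sub>R x0) = 1" using x0 by (simp add: scale)
  then obtain z where z1: "f z = 1" and zmin: "\<And>x. f x = 1 \<Longrightarrow> norm z \<le> norm x"
    using min_norm_exists[OF bl] by blast
  have orth: "inner z k = 0" if k: "f k = 0" for k
  proof -
    define a where "a = inner z k"
    define K where "K = norm k ^ 2"
    have K0: "K \<ge> 0" by (simp add: K_def)
    have "0 \<le> 2*t*a + t^2*K" for t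
    proof -
      have "f (z + t *\<^sub>R k) = 1" using z1 k by (simp add: add scale)
      then have "norm z \<le> norm (z + t *\<^sub>R k)" by (rule zmin)
      then have "norm z ^ 2 \<le> norm (z + t *\<^sub>R k) ^ 2" by (simp add: power_mono)
      also have "\<dots> = inner (z + t *\<^sub>R k) (z + t *\<^sub>R k)" by (simp add: power2_norm_eq_inner)
      also have "\<dots> = inner z z + 2 * t * inner z k + t^2 * inner k k"
        unfolding inner_add_left inner_add_right inner_scaleR_left inner_scaleR_right inner_commute[of k z]
        by (simp add: power2_eq_square algebra_simps)
      also have "\<dots> = norm z ^ 2 + 2 * t * a + t^2 * K"
        by (simp add: a_def K_def power2_norm_eq_inner)
      finally show ?thesis by simp
    qed
    then have "a = 0" using quad0 K0 by blast
    then show ?thesis by (simp add: a_def)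
  qed
  have zne: "z \<noteq> 0" using z1 by auto
  define y where "y = (1 / (norm z)^2) *\<^sub>R z"
  show ?thesis
  proof (intro exI allI)
    fix x
    have "f (x - f x *\<^sub>R z) = 0" using z1 by (simp add: diff scale)
    then have "inner z (x - f x *\<^sub>R z) = 0" by (rule orth)
    then have "inner z x = f x * (norm z)^2" by (simp add: inner_diff_right power2_norm_eq_inner)
    then show "f x = inner x y" using zne by (simp add: y_def inner_commute)
  qed
qed

lemma adjoint_exists:
  fixes A :: "'a::{real_inner,complete_space} \<Rightarrow> 'a"
  assumes bl: "bounded_linear A"
  shows "\<forall>x y. inner (A x) y = inner x (adjoint A y)"
proof -
  have "\<forall>y. \<exists>w. \<forall>x. inner (A x) y = inner x w"
  proof
    fix y
    have "bounded_linear (\<lambda>x. inner (A x) y)"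
      using bounded_linear_compose[OF bounded_linear_inner_left bl] by simp
    from riesz[OF this] show "\<exists>w. \<forall>x. inner (A x) y = inner x w" by blast
  qed
  then obtain g where g: "\<forall>y x. inner (A x) y = inner x (g y)" by metis
  have "\<exists>f'. \<forall>x y. inner (A x) y = inner x (f' y)" using g by blast
  then show ?thesis unfolding adjoint_def by (rule someI_ex)
qed

lemma adjoint_eq:
  fixes A :: "'a::{real_inner,complete_space} \<Rightarrow> 'a"
  assumes "bounded_linear A"
  shows "inner (A x) y = inner x (adjoint A y)"
  using adjoint_exists[OF assms] by blast

lemma adjoint_comp:
  fixes A B :: "'a::{real_inner,complete_space} \<Rightarrow> 'a"
  assumes "bounded_linear A" "bounded_linear B"
  shows "adjoint (A \<circ> B) = adjoint B \<circ> adjoint A"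
  by (rule adjoint_unique) (simp add: adjoint_eq[OF assms(1)] adjoint_eq[OF assms(2)])

lemma adjoint_id: "adjoint (id :: 'a::real_inner \<Rightarrow> 'a) = id"
  by (rule adjoint_unique) simp

lemma adjoint_zero: "adjoint (\<lambda>_::'a::real_inner. 0::'a) = (\<lambda>_. 0)"
  by (rule adjoint_unique) simp

lemma adjoint_linear_gen:
  fixes A :: "'a::{real_inner,complete_space} \<Rightarrow> 'a"
  assumes "bounded_linear A"
  shows "linear (adjoint A)"
proof
  fix x y :: 'a and c :: real
  show "adjoint A (x + y) = adjoint A x + adjoint A y"
    by (rule vector_eq_ldot[THEN iffD1]) (simp add: inner_add_right adjoint_eq[OF assms, symmetric] )
  show "adjoint A (c *\<^sub>R x) = c *\<^sub>R adjoint A x"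
    by (rule vector_eq_ldot[THEN iffD1]) (simp add: adjoint_eq[OF assms, symmetric] )
qed

lemma adjoint_norm_sq:
  fixes A :: "'a::{real_inner,complete_space} \<Rightarrow> 'a"
  assumes "bounded_linear A"
  shows "inner (A (adjoint A h)) h = norm (adjoint A h) ^ 2"
  by (simp add: adjoint_eq[OF assms] power2_norm_eq_inner)




lemma symclp_rtranclp_sym:
  assumes "(symclp r)\<^sup>*\<^sup>* x y" shows "(symclp r)\<^sup>*\<^sup>* y x"
  using assms
proof (induction rule: rtranclp_induct)
  case base then show ?case by simp
next
  case (step y z)
  have "symclp r z y" using step(2) by (auto simp: symclp_def)
  then show ?case using step(3) by (rule converse_rtranclp_into_rtranclp)
qed

locale rgraph =
  fixes E :: "nat \<Rightarrow> nat \<Rightarrow> bool"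
  assumes symE: "E i j \<Longrightarrow> E j i" and irreflE: "\<not> E i i"
begin

abbreviation weq where "weq \<equiv> word_equiv E"

lemma weq_refl[simp]: "weq w w" by (simp add: word_equiv_def)

lemma weq_sym: "weq w v \<Longrightarrow> weq v w"
  unfolding word_equiv_def by (rule symclp_rtranclp_sym)

lemma weq_trans: "weq u v \<Longrightarrow> weq v w \<Longrightarrow> weq u w"
  unfolding word_equiv_def by (rule rtranclp_trans)

lemma swap_cong: "swap_step E w w' \<Longrightarrow> swap_step E (u @ w @ v) (u @ w' @ v)"
proof (induction rule: swap_step.induct)
  case (1 a b xs ys)
  have "swap_step E ((u @ xs) @ [a, b] @ (ys @ v)) ((u @ xs) @ [b, a] @ (ys @ v))"
    using 1 by (rule swap_step.intros)
  then show ?case by simp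
qed

lemma weq_cong: "weq w w' \<Longrightarrow> weq (u @ w @ v) (u @ w' @ v)"
  unfolding word_equiv_def
proof (induction rule: rtranclp_induct)
  case base then show ?case by simp
next
  case (step y z)
  have "symclp (swap_step E) (u @ y @ v) (u @ z @ v)"
    using step(2) swap_cong by (auto simp: symclp_def)
  with step(3) show ?case by (rule rtranclp.rtrancl_into_rtrancl)
qed

lemma weq_append: "weq u u' \<Longrightarrow> weq v v' \<Longrightarrow> weq (u @ v) (u' @ v')"
  using weq_cong[of u u' "[]" v] weq_cong[of v v' u' "[]"] by (auto intro: weq_trans)

lemma weq_Cons: "weq w v \<Longrightarrow> weq (a # w) (a # v)"
  using weq_append[of "[a]" "[a]" w v] by simp

lemma weq_swap: assumes "E a b" shows "weq (xs @ [a, b] @ ys) (xs @ [b, a] @ ys)"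
proof -
  have "swap_step E (xs @ [a, b] @ ys) (xs @ [b, a] @ ys)" using assms by (rule swap_step.intros)
  then have "symclp (swap_step E) (xs @ [a, b] @ ys) (xs @ [b, a] @ ys)" by (rule symclpI1)
  then show ?thesis unfolding word_equiv_def by (rule r_into_rtranclp)
qed

lemma weq_move: "(\<forall>c\<in>set u. E c a) \<Longrightarrow> weq (u @ [a]) (a # u)"
proof (induction u)
  case Nil then show ?case by simp
next
  case (Cons c u)
  have 1: "weq (c # u @ [a]) (c # a # u)" using Cons by (auto intro: weq_Cons)
  have "E c a" using Cons.prems by simp
  then have 2: "weq ([] @ [c, a] @ u) ([] @ [a, c] @ u)" by (rule weq_swap)
  show ?case using weq_trans[OF 1] 2 by simp
qed

lemma weq_inv:
  assumes "\<And>w v. swap_step E w v \<Longrightarrow> f w = f v" and "weq w v"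
  shows "f w = f v"
  using assms(2) unfolding word_equiv_def
proof (induction rule: rtranclp_induct)
  case base then show ?case by simp
next
  case (step y z)
  then show ?case using assms(1) by (auto simp: symclp_def)
qed

lemma weq_length: "weq w v \<Longrightarrow> length w = length v"
  by (rule weq_inv[where f=length]) (auto elim: swap_step.cases)

lemma weq_set: "weq w v \<Longrightarrow> set w = set v"
  by (rule weq_inv[where f=set]) (auto elim: swap_step.cases)

definition prj :: "nat \<Rightarrow> nat \<Rightarrow> nat list \<Rightarrow> nat list" where
  "prj a b w = filter (\<lambda>x. x = a \<or> x = b) w"

lemma weq_prj: assumes "weq w v" and ab: "\<not> E a b" shows "prj a b w = prj a b v"
proof (rule weq_inv[where f="prj a b", OF _ assms(1)])
  fix w v assume "swap_step E w v"
  then show "prj a b w = prj a b v"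
  proof (cases rule: swap_step.cases)
    case (1 x y xs ys)
    have "x \<noteq> y" using 1 irreflE by auto
    moreover have "\<not> ((x = a \<or> x = b) \<and> (y = a \<or> y = b))"
      using 1 ab symE irreflE by auto
    ultimately show ?thesis using 1 by (auto simp: prj_def)
  qed
qed

lemma prj_Cons: "prj x y (a # w) = (if a = x \<or> a = y then a # prj x y w else prj x y w)"
  by (simp add: prj_def)

lemma prj_weq: "(\<forall>a b. \<not> E a b \<longrightarrow> prj a b w = prj a b v) \<Longrightarrow> weq w v"
proof (induction w arbitrary: v)
  case Nil
  show ?case
  proof (cases v)
    case Nil then show ?thesis by simp
  next
    case (Cons x v')
    have "prj x x [] = prj x x v" using Nil irreflE[of x] by simp
    then show ?thesis using Cons by (simp add: prj_def)
  qed
next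
  case (Cons a w)
  have pr: "\<And>x y. \<not> E x y \<Longrightarrow> prj x y (a # w) = prj x y v" using Cons.prems by simp
  have e: "prj a a (a # w) = prj a a v" using pr[OF irreflE] .
  have "a \<in> set (prj a a (a # w))" by (simp add: prj_def)
  then have "a \<in> set (prj a a v)" by (simp only: e)
  then have "a \<in> set v" by (simp add: prj_def)
  then obtain v1 v2 where v: "v = v1 @ a # v2" and av1: "a \<notin> set v1"
    by (meson split_list_first)
  have comm: "E c a" if c: "c \<in> set v1" for c
  proof (rule ccontr)
    assume nE: "\<not> E c a"
    then have "\<not> E a c" using symE by blast
    then have "prj a c (a # w) = prj a c v" by (rule pr)
    moreover have "prj a c v1 \<noteq> []" using c by (simp add: prj_def filter_empty_conv) blast
    then obtain x xs where px: "prj a c v1 = x # xs" by (cases "prj a c v1") auto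
    moreover have "set (prj a c v1) \<subseteq> {c}" using av1 by (auto simp: prj_def)
    ultimately have xc: "x = c" by auto
    have "prj a c v = x # (xs @ prj a c (a # v2))" using v px by (simp add: prj_def)
    moreover have "prj a c (a # w) = a # prj a c w" by (simp add: prj_def)
    ultimately have "a = x" using \<open>prj a c (a # w) = prj a c v\<close> by simp
    then show False using xc c av1 by simp
  qed
  have m: "weq (v1 @ [a]) (a # v1)" using comm by (intro weq_move) blast
  have vv: "weq v (a # v1 @ v2)"
    using weq_append[OF m weq_refl[of v2]] v by simp
  have "prj x y w = prj x y (v1 @ v2)" if "\<not> E x y" for x y
  proof -
    have "prj x y (a # w) = prj x y v" using pr that .
    also have "\<dots> = prj x y (a # v1 @ v2)" using weq_prj[OF vv that] .
    finally show ?thesis by (simp add: prj_Cons split: if_splits)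
  qed
  then have "weq w (v1 @ v2)" using Cons.IH by blast
  then have "weq (a # w) (a # v1 @ v2)" by (rule weq_Cons)
  then show ?case using weq_sym[OF vv] by (rule weq_trans)
qed

lemma weq_iff: "weq w v \<longleftrightarrow> (\<forall>a b. \<not> E a b \<longrightarrow> prj a b w = prj a b v)"
  using weq_prj prj_weq by blast

lemma weq_cancel_right: "weq (u @ w) (v @ w) \<Longrightarrow> weq u v"
  unfolding weq_iff by (simp add: prj_def)

lemma distinct_card1_eq:
  assumes "distinct xs" "distinct ys" "set xs = set ys" "card (set xs) \<le> 1"
  shows "xs = ys"
proof -
  have l: "length xs = length ys" using assms distinct_card by metis
  have "length xs \<le> 1" using assms distinct_card by metis
  then consider "xs = []" | x where "xs = [x]"
    by (cases xs) auto
  then show ?thesis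
  proof cases
    case 1 then show ?thesis using assms(3) by simp
  next
    case 2
    then obtain y where "ys = [y]" using l by (cases ys) auto
    then show ?thesis using 2 assms(3) by simp
  qed
qed

lemma weq_clique_perm:
  assumes "distinct u" "distinct v" "set u = set v" "\<forall>x\<in>set u. \<forall>y\<in>set u. x \<noteq> y \<longrightarrow> E x y"
  shows "weq u v"
  unfolding weq_iff
proof (intro allI impI)
  fix a b assume nab: "\<not> E a b"
  have sub: "set (prj a b u) \<subseteq> {a, b} \<inter> set u" by (auto simp: prj_def)
  have "card (set (prj a b u)) \<le> 1"
  proof (cases "a = b")
    case True
    then have "set (prj a b u) \<subseteq> {a}" by (auto simp: prj_def)
    then show ?thesis using card_mono[of "{a}" "set (prj a b u)"] by simp
  next
    case False
    have "\<not> (a \<in> set u \<and> b \<in> set u)" using assms(4) nab False by blast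
    then have "set (prj a b u) \<subseteq> {a} \<or> set (prj a b u) \<subseteq> {b}" using sub by blast
    then show ?thesis using card_mono[of "{a}" "set (prj a b u)"] card_mono[of "{b}" "set (prj a b u)"] by auto
  qed
  moreover have "set (prj a b u) = set (prj a b v)" using assms(3) by (simp add: prj_def)
  ultimately show "prj a b u = prj a b v"
    using assms(1,2) by (intro distinct_card1_eq) (auto simp: prj_def)
qed

end

lemma alt_sum_Pow:
  assumes "finite A" "A \<noteq> {}"
  shows "(\<Sum>U\<in>Pow A. (-1::real) ^ card U) = 0"
proof -
  obtain a where a: "a \<in> A" using assms by blast
  define B where "B = A - {a}"
  have A: "A = insert a B" and aB: "a \<notin> B" and fB: "finite B" using a assms by (auto simp: B_def)
  have disj: "Pow B \<inter> insert a ` Pow B = {}" using aB by auto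
  have inj: "inj_on (insert a) (Pow B)" using aB by (auto simp: inj_on_def)
  have "(\<Sum>U\<in>Pow A. (-1::real) ^ card U) = (\<Sum>U\<in>Pow B. (-1::real) ^ card U) + (\<Sum>U\<in>insert a ` Pow B. (-1::real) ^ card U)"
    unfolding A Pow_insert using fB disj by (intro sum.union_disjoint) auto
  also have "(\<Sum>U\<in>insert a ` Pow B. (-1::real) ^ card U) = (\<Sum>U\<in>Pow B. (-1::real) ^ card (insert a U))"
    using inj by (simp add: sum.reindex)
  also have "\<dots> = (\<Sum>U\<in>Pow B. - ((-1::real) ^ card U))"
  proof (rule sum.cong)
    fix U assume "U \<in> Pow B"
    then have "finite U" "a \<notin> U" using fB aB finite_subset by auto
    then show "(-1::real) ^ card (insert a U) = - ((-1) ^ card U)" by simp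
  qed simp
  finally show ?thesis by (simp add: sum_negf)
qed

context rgraph begin

definition cls :: "nat list \<Rightarrow> nat list set" where "cls w = {v. weq w v}"

lemma cls_eq_iff: "cls w = cls v \<longleftrightarrow> weq w v"
proof
  assume "cls w = cls v"
  then have "v \<in> cls w" by (simp add: cls_def)
  then show "weq w v" by (simp add: cls_def)
next
  assume "weq w v"
  then show "cls w = cls v" unfolding cls_def using weq_sym weq_trans by blast
qed

lemma rep_cls: "weq w (rep (cls w))"
proof -
  have "w \<in> cls w" by (simp add: cls_def)
  then have "rep (cls w) \<in> cls w" unfolding rep_def by (rule someI)
  then show ?thesis by (simp add: cls_def)
qed

lemma cls_rep: "cls (rep (cls w)) = cls w"
  using rep_cls cls_eq_iff weq_sym by metis

lemma mlen_cls: "mlen (cls w) = length w"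
  unfolding mlen_def using weq_length[OF rep_cls] by simp

lemma set_rep_cls: "set (rep (cls w)) = set w"
  using weq_set[OF rep_cls] by simp

definition CS :: "nat set \<Rightarrow> nat list set set" where "CS S = cls ` {w. set w \<subseteq> S}"
definition CSk :: "nat set \<Rightarrow> nat \<Rightarrow> nat list set set" where
  "CSk S k = cls ` {w. set w \<subseteq> S \<and> length w = k}"

lemma finite_CSk: "finite S \<Longrightarrow> finite (CSk S k)"
  unfolding CSk_def by (intro finite_imageI finite_lists_length_eq)

definition appU :: "nat list set \<Rightarrow> nat set \<Rightarrow> nat list set" where
  "appU p U = cls (rep p @ sorted_list_of_set U)"

lemma appU_cls: "appU (cls w) U = cls (w @ sorted_list_of_set U)"
  unfolding appU_def cls_eq_iff by (intro weq_append weq_sym[OF rep_cls] weq_refl)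

definition lastl :: "nat list set \<Rightarrow> nat set" where
  "lastl q = {a. \<exists>w. q = cls (w @ [a])}"

lemma lastl_sub: "set w0 \<subseteq> S \<Longrightarrow> lastl (cls w0) \<subseteq> S"
proof
  fix a assume "set w0 \<subseteq> S" "a \<in> lastl (cls w0)"
  then obtain w where "cls w0 = cls (w @ [a])" by (auto simp: lastl_def)
  then have "set w0 = set (w @ [a])" using weq_set cls_eq_iff by blast
  then show "a \<in> S" using \<open>set w0 \<subseteq> S\<close> by auto
qed

lemma lastl_ne: "w0 \<noteq> [] \<Longrightarrow> lastl (cls w0) \<noteq> {}"
proof -
  assume "w0 \<noteq> []"
  then have "cls w0 = cls (butlast w0 @ [last w0])" using append_butlast_last_id by simp
  then have "last w0 \<in> lastl (cls w0)" unfolding lastl_def by blast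
  then show ?thesis by blast
qed

lemma clique_list: "finite U \<Longrightarrow> is_clique E U \<Longrightarrow>
   \<forall>x\<in>set (sorted_list_of_set U). \<forall>y\<in>set (sorted_list_of_set U). x \<noteq> y \<longrightarrow> E x y"
  by (simp add: is_clique_def)

lemma lastl_app:
  assumes fU: "finite U" and cU: "is_clique E U"
  shows "U \<subseteq> lastl (cls (w @ sorted_list_of_set U))"
proof
  fix b assume b: "b \<in> U"
  have "weq (sorted_list_of_set U) (sorted_list_of_set (U - {b}) @ [b])"
    using fU b cU by (intro weq_clique_perm) (auto simp: is_clique_def)
  then have "weq (w @ sorted_list_of_set U) ((w @ sorted_list_of_set (U - {b})) @ [b])"
    using weq_append[OF weq_refl] by simp
  then show "b \<in> lastl (cls (w @ sorted_list_of_set U))"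
    unfolding lastl_def cls_eq_iff by blast
qed

lemma key_last:
  assumes eq: "weq (w1 @ v) (w2 @ [b])" and bv: "b \<notin> set v"
  shows "\<exists>x z. w1 = x @ b # z \<and> (\<forall>c\<in>set (z @ v). E b c)"
proof -
  have "b \<in> set (w1 @ v)" using weq_set[OF eq] by simp
  then have "b \<in> set w1" using bv by simp
  then obtain x z where w1: "w1 = x @ b # z" and bz: "b \<notin> set z" by (meson split_list_last)
  have "E b c" if c: "c \<in> set (z @ v)" for c
  proof (rule ccontr)
    assume nE: "\<not> E b c"
    have cb: "c \<noteq> b" using c bz bv by auto
    have p: "prj b c (w1 @ v) = prj b c (w2 @ [b])" using weq_prj[OF eq nE] .
    have "prj b c (z @ v) \<noteq> []" using c by (simp add: prj_def filter_empty_conv) blast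
    moreover have "set (prj b c (z @ v)) \<subseteq> {c}" using bz bv by (auto simp: prj_def)
    ultimately have "last (prj b c (z @ v)) = c" using last_in_set by blast
    have "prj b c (w1 @ v) = prj b c x @ b # prj b c (z @ v)" using w1 by (simp add: prj_def)
    then have "last (prj b c (w1 @ v)) = last (prj b c (z @ v))"
      using \<open>prj b c (z @ v) \<noteq> []\<close> by simp
    then have "last (prj b c (w1 @ v)) = c" using \<open>last (prj b c (z @ v)) = c\<close> by simp
    moreover have "last (prj b c (w2 @ [b])) = b" by (simp add: prj_def)
    ultimately show False using p cb by simp
  qed
  then show ?thesis using w1 by blast
qed

lemma lastl_ex:
  assumes "finite U"
  shows "U \<subseteq> lastl (cls w0) \<Longrightarrow> is_clique E U \<and> (\<exists>w. cls w0 = cls (w @ sorted_list_of_set U))"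
  using assms
proof (induction U rule: finite_induct)
  case empty
  show ?case by (auto simp: is_clique_def)
next
  case (insert b U)
  then have cU: "is_clique E U" and "\<exists>w. cls w0 = cls (w @ sorted_list_of_set U)" by auto
  then obtain w1 where w1: "cls w0 = cls (w1 @ sorted_list_of_set U)" by blast
  have "b \<in> lastl (cls w0)" using insert by auto
  then obtain w2 where w2: "cls w0 = cls (w2 @ [b])" by (auto simp: lastl_def)
  have eq: "weq (w1 @ sorted_list_of_set U) (w2 @ [b])" using w1 w2 cls_eq_iff by metis
  have bv: "b \<notin> set (sorted_list_of_set U)" using insert by simp
  obtain x z where xz: "w1 = x @ b # z" and com: "\<forall>c\<in>set (z @ sorted_list_of_set U). E b c"
    using key_last[OF eq bv] by blast
  have "weq ((z @ sorted_list_of_set U) @ [b]) (b # z @ sorted_list_of_set U)"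
    using com symE by (intro weq_move) blast
  then have m: "weq (w1 @ sorted_list_of_set U) (x @ z @ sorted_list_of_set U @ [b])"
    using weq_append[OF weq_refl[of x] weq_sym] xz by simp
  have cI: "is_clique E (insert b U)"
    using cU com symE insert.hyps by (auto simp: is_clique_def)
  have sl: "distinct (sorted_list_of_set V) \<and> set (sorted_list_of_set V) = V" if "finite V" for V :: "nat set"
    using that by simp
  have d1: "distinct (sorted_list_of_set U @ [b])" using sl[of U] insert.hyps by simp
  have d2: "distinct (sorted_list_of_set (insert b U))" using sl[of "insert b U"] insert.hyps by blast
  have s12: "set (sorted_list_of_set U @ [b]) = set (sorted_list_of_set (insert b U))"
    using sl[of U] sl[of "insert b U"] insert.hyps by auto
  have c12: "\<forall>x\<in>set (sorted_list_of_set U @ [b]). \<forall>y\<in>set (sorted_list_of_set U @ [b]). x \<noteq> y \<longrightarrow> E x y"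
    using cI sl[of U] insert.hyps unfolding is_clique_def by auto
  have "weq (sorted_list_of_set U @ [b]) (sorted_list_of_set (insert b U))"
    by (rule weq_clique_perm[OF d1 d2 s12 c12])
  then have "weq (x @ z @ sorted_list_of_set U @ [b]) ((x @ z) @ sorted_list_of_set (insert b U))"
    using weq_append[OF weq_refl[of "x @ z"]] by simp
  then have "cls w0 = cls ((x @ z) @ sorted_list_of_set (insert b U))"
    using w1 m cls_eq_iff weq_trans by metis
  then show ?case using cI by blast
qed

definition Pk :: "nat set \<Rightarrow> nat \<Rightarrow> (nat list set \<times> nat set) set" where
  "Pk S k = {(p, U). p \<in> CS S \<and> U \<subseteq> S \<and> is_clique E U \<and> mlen p + card U = k}"

lemma Pk_finite:
  assumes "finite S" shows "finite (Pk S k)"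
proof (rule finite_subset)
  show "Pk S k \<subseteq> (\<Union>j\<le>k. CSk S j) \<times> Pow S"
  proof
    fix x assume "x \<in> Pk S k"
    then obtain p U where x: "x = (p, U)" and p: "p \<in> CS S" and U: "U \<subseteq> S" and l: "mlen p + card U = k"
      by (auto simp: Pk_def)
    from p obtain w where w: "p = cls w" "set w \<subseteq> S" by (auto simp: CS_def)
    have "p \<in> CSk S (length w)" using w by (auto simp: CSk_def)
    moreover have "length w \<le> k" using l w mlen_cls by auto
    ultimately show "x \<in> (\<Union>j\<le>k. CSk S j) \<times> Pow S" using x U by auto
  qed
  show "finite ((\<Union>j\<le>k. CSk S j) \<times> Pow S)" using assms finite_CSk by auto
qed

lemma comb:
  fixes f :: "nat list set \<Rightarrow> real"
  assumes fS: "finite S" and k: "k \<ge> 1"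
  shows "(\<Sum>x\<in>Pk S k. (-1) ^ card (snd x) * f (appU (fst x) (snd x))) = 0"
proof -
  let ?g = "\<lambda>x. appU (fst x) (snd x)"
  let ?h = "\<lambda>x. (-1::real) ^ card (snd x) * f (appU (fst x) (snd x))"
  have img: "?g ` Pk S k \<subseteq> CSk S k"
  proof
    fix q assume "q \<in> ?g ` Pk S k"
    then obtain p U where pU: "(p, U) \<in> Pk S k" and q: "q = appU p U" by auto
    from pU obtain w where w: "p = cls w" "set w \<subseteq> S" and U: "U \<subseteq> S" and l: "mlen p + card U = k"
      by (auto simp: Pk_def CS_def)
    have fU: "finite U" using U fS finite_subset by auto
    have "q = cls (w @ sorted_list_of_set U)" using q w appU_cls by simp
    moreover have "set (w @ sorted_list_of_set U) \<subseteq> S" using w U fU by auto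
    moreover have "length (w @ sorted_list_of_set U) = k" using l w fU mlen_cls by simp
    ultimately show "q \<in> CSk S k" by (auto simp: CSk_def)
  qed
  have "(\<Sum>x\<in>Pk S k. ?h x) = (\<Sum>q\<in>CSk S k. \<Sum>x\<in>{x \<in> Pk S k. ?g x = q}. ?h x)"
    using sum.group[OF Pk_finite[OF fS] finite_CSk[OF fS] img, of ?h] by simp
  also have "\<dots> = (\<Sum>q\<in>CSk S k. 0)"
  proof (rule sum.cong[OF refl])
    fix q assume "q \<in> CSk S k"
    then obtain w0 where q: "q = cls w0" and w0: "set w0 \<subseteq> S" "length w0 = k" by (auto simp: CSk_def)
    let ?F = "{x \<in> Pk S k. ?g x = q}"
    have bij: "bij_betw snd ?F (Pow (lastl q))"
    proof (rule bij_betwI')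
      fix x y assume x: "x \<in> ?F" and y: "y \<in> ?F"
      show "(snd x = snd y) = (x = y)"
      proof
        assume s: "snd x = snd y"
        obtain p U where xx: "x = (p, U)" by (cases x)
        obtain p' U' where yy: "y = (p', U')" by (cases y)
        from x xx obtain w where pw: "p = cls w" by (auto simp: Pk_def CS_def)
        from y yy obtain w' where pw': "p' = cls w'" by (auto simp: Pk_def CS_def)
        have "appU p U = appU p' U" using x y xx yy s by simp
        then have "weq (w @ sorted_list_of_set U) (w' @ sorted_list_of_set U)"
          using pw pw' appU_cls cls_eq_iff by simp
        then have "weq w w'" by (rule weq_cancel_right)
        then have "p = p'" using pw pw' cls_eq_iff by simp
        then show "x = y" using xx yy s by simp
      qed simp
    next
      fix x assume x: "x \<in> ?F"
      obtain p U where xx: "x = (p, U)" by (cases x)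
      from x xx obtain w where pw: "p = cls w" and U: "U \<subseteq> S" "is_clique E U" and qq: "appU p U = q"
        by (auto simp: Pk_def CS_def)
      have fU: "finite U" using U fS finite_subset by auto
      have "q = cls (w @ sorted_list_of_set U)" using qq pw appU_cls by simp
      then show "snd x \<in> Pow (lastl q)" using lastl_app[OF fU U(2)] xx by simp
    next
      fix U assume U: "U \<in> Pow (lastl q)"
      have Lsub: "lastl q \<subseteq> S" using lastl_sub[OF w0(1)] q by simp
      have fU: "finite U" using finite_subset[OF _ fS] U Lsub by blast
      obtain w where cU: "is_clique E U" and qw: "q = cls (w @ sorted_list_of_set U)"
        using lastl_ex[OF fU] U q by blast
      have "set (w @ sorted_list_of_set U) = set w0" using qw q weq_set cls_eq_iff by metis
      then have ws: "set w \<subseteq> S" using w0 by auto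
      have "length (w @ sorted_list_of_set U) = k" using qw q weq_length cls_eq_iff w0 by metis
      then have len: "mlen (cls w) + card U = k" using fU mlen_cls by simp
      have "(cls w, U) \<in> ?F"
        using ws U Lsub cU len qw appU_cls by (auto simp: Pk_def CS_def)
      then show "\<exists>x\<in>?F. U = snd x" by force
    qed
    have "(\<Sum>x\<in>?F. ?h x) = (\<Sum>x\<in>?F. (-1::real) ^ card (snd x) * f q)" by simp
    also have "\<dots> = (\<Sum>U\<in>Pow (lastl q). (-1::real) ^ card U) * f q"
      using sum.reindex_bij_betw[OF bij, of "\<lambda>U. (-1::real) ^ card U"] by (simp add: sum_distrib_right[symmetric])
    also have "\<dots> = 0"
    proof -
      have "w0 \<noteq> []" using w0 k by auto
      then have "lastl q \<noteq> {}" using lastl_ne[of w0] q by simp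
      moreover have "finite (lastl q)" using lastl_sub[OF w0(1)] q fS finite_subset by auto
      ultimately have "(\<Sum>U\<in>Pow (lastl q). (-1::real) ^ card U) = 0" by (intro alt_sum_Pow)
      then show ?thesis by simp
    qed
    finally show "(\<Sum>x\<in>?F. ?h x) = 0" .
  qed
  finally show ?thesis by simp
qed

end



lemma foldr_word: "foldr (\<lambda>i f. T i \<circ> f) u g = word_op T u \<circ> g"
  by (induction u arbitrary: g) (auto simp: word_op_def)

lemma word_op_Nil[simp]: "word_op T [] = id" by (simp add: word_op_def)

lemma word_op_Cons: "word_op T (a # w) = T a \<circ> word_op T w"
  using foldr_word[of T w id] by (simp add: word_op_def)

lemma word_op_append: "word_op T (u @ v) = word_op T u \<circ> word_op T v"
proof -
  have "word_op T (u @ v) = foldr (\<lambda>i f. T i \<circ> f) u (word_op T v)" by (simp add: word_op_def)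
  then show ?thesis by (simp add: foldr_word)
qed

locale gfam = rgraph E for E :: "nat \<Rightarrow> nat \<Rightarrow> bool" +
  fixes n :: nat and T :: "nat \<Rightarrow> 'a::{real_inner,complete_space} \<Rightarrow> 'a"
  assumes fam: "gamma_family n E T"
begin

lemma bl_T: "i \<in> {1..n} \<Longrightarrow> bounded_linear (T i)"
  using fam by (simp add: gamma_family_def)

lemma comm_T: "i \<in> {1..n} \<Longrightarrow> j \<in> {1..n} \<Longrightarrow> E i j \<Longrightarrow> T i \<circ> T j = T j \<circ> T i"
proof -
  have "\<forall>i\<in>{1..n}. \<forall>j\<in>{1..n}. E i j \<longrightarrow> T i \<circ> T j = T j \<circ> T i" using fam unfolding gamma_family_def by (elim conjE)
  then show "i \<in> {1..n} \<Longrightarrow> j \<in> {1..n} \<Longrightarrow> E i j \<Longrightarrow> T i \<circ> T j = T j \<circ> T i" by blast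
qed

lemma bl_word: "set w \<subseteq> {1..n} \<Longrightarrow> bounded_linear (word_op T w)"
proof (induction w)
  case Nil then show ?case by (simp add: id_def bounded_linear_ident)
next
  case (Cons a w)
  then have "bounded_linear (T a)" "bounded_linear (word_op T w)" using bl_T by auto
  then show ?case by (simp add: word_op_Cons bounded_linear_compose o_def)
qed

lemma word_op_weq:
  assumes "set w \<subseteq> {1..n}" "weq w v"
  shows "word_op T w = word_op T v"
proof -
  let ?f = "\<lambda>w. if set w \<subseteq> {1..n} then Some (word_op T w) else None"
  have "?f w = ?f v"
  proof (rule weq_inv[OF _ assms(2)])
    fix w v assume "swap_step E w v"
    then show "?f w = ?f v"
    proof (cases rule: swap_step.cases)
      case (1 a b xs ys)
      show ?thesis
      proof (cases "set w \<subseteq> {1..n}")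
        case True
        then have ab: "a \<in> {1..n}" "b \<in> {1..n}" using 1 by auto
        have "T a \<circ> (T b \<circ> word_op T ys) = T b \<circ> (T a \<circ> word_op T ys)"
          using comm_T[OF ab 1(3)] by (simp add: comp_assoc[symmetric])
        then show ?thesis using 1 True by (simp add: word_op_append word_op_Cons)
      next
        case False then show ?thesis using 1 by auto
      qed
    qed
  qed
  then show ?thesis using assms(1) by (auto split: if_splits)
qed

lemma mon_op_cls: "set w \<subseteq> {1..n} \<Longrightarrow> mon_op T (cls w) = word_op T w"
  unfolding mon_op_def using word_op_weq[OF _ rep_cls[of w]] by simp

definition Aop :: "nat list set \<Rightarrow> 'a \<Rightarrow> 'a" where "Aop p = adjoint (mon_op T p)"
definition psi :: "nat set \<Rightarrow> 'a \<Rightarrow> real" where "psi U y = (norm (adjoint (join_op E T U) y))^2"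

lemma join_op_clique: "is_clique E U \<Longrightarrow> join_op E T U = word_op T (sorted_list_of_set U)"
  by (simp add: join_op_def)

lemma bl_join: "U \<subseteq> {1..n} \<Longrightarrow> bounded_linear (join_op E T U)"
proof -
  assume U: "U \<subseteq> {1..n}"
  then have "finite U" using finite_subset finite_atLeastAtMost by metis
  then show ?thesis using U bl_word[of "sorted_list_of_set U"]
    by (auto simp: join_op_def bounded_linear_zero)
qed

lemma psi_nonclique: "\<not> is_clique E U \<Longrightarrow> psi U y = 0"
  by (simp add: psi_def join_op_def adjoint_zero)

lemma psi_empty: "psi {} y = norm y ^ 2"
  by (simp add: psi_def join_op_def is_clique_def adjoint_id)

lemma psi_zero: "U \<subseteq> {1..n} \<Longrightarrow> psi U 0 = 0"
proof -
  assume "U \<subseteq> {1..n}"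
  then have "linear (adjoint (join_op E T U))" by (intro adjoint_linear_gen bl_join)
  then have "adjoint (join_op E T U) 0 = 0" by (rule linear_0)
  then show ?thesis by (simp add: psi_def)
qed

lemma bl_mon: "p \<in> CS S \<Longrightarrow> S \<subseteq> {1..n} \<Longrightarrow> bounded_linear (mon_op T p)"
proof -
  assume "p \<in> CS S" "S \<subseteq> {1..n}"
  then obtain w where "p = cls w" "set w \<subseteq> {1..n}" by (auto simp: CS_def)
  then show ?thesis using mon_op_cls bl_word by simp
qed

lemma psi_app:
  assumes S: "S \<subseteq> {1..n}" and p: "p \<in> CS S" and U: "U \<subseteq> S" "is_clique E U"
  shows "norm (Aop (appU p U) h)^2 = psi U (Aop p h)"
proof -
  obtain w where w: "p = cls w" "set w \<subseteq> S" using p by (auto simp: CS_def)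
  have fS: "finite S" using finite_subset[OF S finite_atLeastAtMost] .
  have fU: "finite U" using finite_subset[OF U(1) fS] .
  have sw: "set (w @ sorted_list_of_set U) \<subseteq> {1..n}" using w U S fU by auto
  have "mon_op T (appU p U) = word_op T w \<circ> word_op T (sorted_list_of_set U)"
    using w appU_cls mon_op_cls[OF sw] by (simp add: word_op_append)
  also have "\<dots> = mon_op T p \<circ> join_op E T U"
    using w S U mon_op_cls by (simp add: join_op_clique)
  finally have e: "mon_op T (appU p U) = mon_op T p \<circ> join_op E T U" .
  have "Aop (appU p U) = adjoint (join_op E T U) \<circ> Aop p"
  proof -
    have "U \<subseteq> {1..n}" using U S by auto
    then show ?thesis unfolding Aop_def e using adjoint_comp[OF bl_mon[OF p S] bl_join] by simp
  qed
  then show ?thesis by (simp add: psi_def)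
qed

lemma Aop_Nil: "Aop (cls []) = id"
  using mon_op_cls[of "[]"] by (simp add: Aop_def adjoint_id)

lemma Pk_zero: "S \<subseteq> {1..n} \<Longrightarrow> Pk S 0 = {(cls [], {})}"
proof -
  assume S: "S \<subseteq> {1..n}"
  have "x = (cls [], {})" if "x \<in> Pk S 0" for x
  proof -
    obtain p U where x: "x = (p, U)" by (cases x)
    with that obtain w where "p = cls w" "mlen p = 0" "card U = 0" "U \<subseteq> S"
      by (auto simp: Pk_def CS_def)
    moreover have "finite U" using finite_subset[OF \<open>U \<subseteq> S\<close> finite_subset[OF S finite_atLeastAtMost]] .
    ultimately show ?thesis using x mlen_cls by auto
  qed
  moreover have "(cls [], {}) \<in> Pk S 0" by (auto simp: Pk_def CS_def is_clique_def mlen_cls)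
  ultimately show ?thesis by blast
qed

lemma ident:
  assumes S: "S \<subseteq> {1..n}"
  shows "(\<Sum>x\<in>Pk S k. (-1) ^ card (snd x) * psi (snd x) (Aop (fst x) h)) = (if k = 0 then norm h ^ 2 else 0)"
proof (cases "k = 0")
  case True
  then show ?thesis using Pk_zero[OF S] by (simp add: psi_empty Aop_Nil)
next
  case False
  have fS: "finite S" using finite_subset[OF S finite_atLeastAtMost] .
  have "(\<Sum>x\<in>Pk S k. (-1) ^ card (snd x) * psi (snd x) (Aop (fst x) h))
      = (\<Sum>x\<in>Pk S k. (-1) ^ card (snd x) * (\<lambda>q. norm (Aop q h)^2) (appU (fst x) (snd x)))"
  proof (rule sum.cong[OF refl])
    fix x assume x: "x \<in> Pk S k"
    obtain p U where xx: "x = (p, U)" by (cases x)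
    have "p \<in> CS S" "U \<subseteq> S" "is_clique E U" using x xx by (auto simp: Pk_def)
    then have "norm (Aop (appU p U) h)^2 = psi U (Aop p h)" by (rule psi_app[OF S])
    then show "(-1) ^ card (snd x) * psi (snd x) (Aop (fst x) h) = (-1) ^ card (snd x) * (\<lambda>q. norm (Aop q h)^2) (appU (fst x) (snd x))"
      using xx by simp
  qed
  also have "\<dots> = 0" by (rule comb[OF fS]) (use False in simp)
  finally show ?thesis using False by simp
qed

end

fun cc :: "nat \<Rightarrow> nat \<Rightarrow> real" where
  "cc 0 j = (if j = 0 then 1 else 0)"
| "cc (Suc d) j = (\<Sum>k\<le>j. cc d k)"

lemma cc_nonneg: "0 \<le> cc d j"
  by (induction d arbitrary: j) (auto intro: sum_nonneg)

lemma cc_0[simp]: "cc d 0 = 1"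
  by (induction d) auto

lemma cc_diff: "cc (Suc d) (Suc j) - cc d (Suc j) = cc (Suc d) j"
  by simp

lemma cc_rec: "(1 - s) * (\<Sum>j\<le>N. cc (Suc d) j * s^j) = (\<Sum>j\<le>N. cc d j * s^j) - cc (Suc d) N * s^(Suc N)"
proof (induction N)
  case 0 then show ?case by (simp add: algebra_simps)
next
  case (Suc N)
  have e: "cc (Suc d) (Suc N) = cc (Suc d) N + cc d (Suc N)" by simp
  have "(1 - s) * (\<Sum>j\<le>Suc N. cc (Suc d) j * s^j)
      = (1 - s) * (\<Sum>j\<le>N. cc (Suc d) j * s^j) + (1 - s) * (cc (Suc d) (Suc N) * s^(Suc N))"
    by (simp add: algebra_simps)
  also have "\<dots> = (\<Sum>j\<le>N. cc d j * s^j) - cc (Suc d) N * s^(Suc N) + (1 - s) * (cc (Suc d) (Suc N) * s^(Suc N))"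
    using Suc by simp
  also have "\<dots> = (\<Sum>j\<le>Suc N. cc d j * s^j) - cc (Suc d) (Suc N) * s^(Suc (Suc N))"
    unfolding e by (simp add: algebra_simps)
  finally show ?case .
qed

lemma cc_partial:
  assumes s: "0 \<le> s" "s < (1::real)"
  shows "(\<Sum>j\<le>N. cc d j * s^j) \<le> 1 / (1-s)^d"
proof (induction d)
  case 0
  have "(\<Sum>j\<le>N. cc 0 j * s^j) = (\<Sum>j\<in>{0}. cc 0 j * s^j)"
    by (rule sum.mono_neutral_right) auto
  then show ?case by simp
next
  case (Suc d)
  have "(1 - s) * (\<Sum>j\<le>N. cc (Suc d) j * s^j) \<le> (\<Sum>j\<le>N. cc d j * s^j)"
    unfolding cc_rec using cc_nonneg[of "Suc d" N] s by simp
  also have "\<dots> \<le> 1 / (1-s)^d" by (rule Suc)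
  finally have "(1 - s) * (\<Sum>j\<le>N. cc (Suc d) j * s^j) \<le> 1 / (1-s)^d" .
  then show ?case using s by (simp add: field_simps)
qed

lemma beta:
  assumes "finite U"
  shows "card U \<le> d \<Longrightarrow> (\<Sum>Y\<in>Pow U. (-1::real)^(card U - card Y) * cc (d - card Y) j)
       = (if card U \<le> j then (-1)^card U * cc d (j - card U) else 0)"
  using assms
proof (induction U arbitrary: d j rule: finite_induct)
  case empty then show ?case by simp
next
  case (insert a U)
  obtain d' where d: "d = Suc d'" using insert by (cases d) auto
  have ud: "card U \<le> d'" using insert d by simp
  have disj: "Pow U \<inter> insert a ` Pow U = {}" using insert by auto
  have inj: "inj_on (insert a) (Pow U)"
  proof (rule inj_onI)
    fix x y assume xy: "x \<in> Pow U" "y \<in> Pow U" "insert a x = insert a y"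
    have "a \<notin> x" "a \<notin> y" using insert.hyps(2) xy by auto
    then show "x = y" using xy(3) by (metis Diff_insert_absorb)
  qed
  let ?g = "\<lambda>Y. (-1::real)^(card (insert a U) - card Y) * cc (d - card Y) j"
  have "(\<Sum>Y\<in>Pow (insert a U). ?g Y) = (\<Sum>Y\<in>Pow U. ?g Y) + (\<Sum>Y\<in>insert a ` Pow U. ?g Y)"
    unfolding Pow_insert using insert disj by (intro sum.union_disjoint) auto
  also have "(\<Sum>Y\<in>insert a ` Pow U. ?g Y) = (\<Sum>Y\<in>Pow U. ?g (insert a Y))"
    using inj by (simp add: sum.reindex)
  also have "(\<Sum>Y\<in>Pow U. ?g (insert a Y)) = (\<Sum>Y\<in>Pow U. (-1::real)^(card U - card Y) * cc (d' - card Y) j)"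
  proof (rule sum.cong[OF refl])
    fix Y assume "Y \<in> Pow U"
    then have YU: "Y \<subseteq> U" by simp
    have "finite Y" using finite_subset[OF YU insert.hyps(1)] .
    moreover have "a \<notin> Y" using YU insert.hyps(2) by auto
    moreover have "card Y \<le> card U" using card_mono[OF insert.hyps(1) YU] .
    ultimately show "?g (insert a Y) = (-1::real)^(card U - card Y) * cc (d' - card Y) j"
      using insert d by simp
  qed
  also have "(\<Sum>Y\<in>Pow U. ?g Y) = - (\<Sum>Y\<in>Pow U. (-1::real)^(card U - card Y) * cc (d - card Y) j)"
    unfolding sum_negf[symmetric]
  proof (rule sum.cong[OF refl])
    fix Y assume "Y \<in> Pow U"
    then have "card Y \<le> card U" using card_mono[OF insert.hyps(1)] by simp
    then have "card (insert a U) - card Y = Suc (card U - card Y)" using insert by simp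
    then show "?g Y = - ((-1::real)^(card U - card Y) * cc (d - card Y) j)" by simp
  qed
  also have "(\<Sum>Y\<in>Pow U. (-1::real)^(card U - card Y) * cc (d - card Y) j)
     = (if card U \<le> j then (-1)^card U * cc d (j - card U) else 0)"
    using insert.IH[of d j] ud d by simp
  also have "(\<Sum>Y\<in>Pow U. (-1::real)^(card U - card Y) * cc (d' - card Y) j)
     = (if card U \<le> j then (-1)^card U * cc d' (j - card U) else 0)"
    using insert.IH[of d' j] ud by simp
  finally have eq: "(\<Sum>Y\<in>Pow (insert a U). ?g Y) = - (if card U \<le> j then (-1)^card U * cc d (j - card U) else 0)
     + (if card U \<le> j then (-1)^card U * cc d' (j - card U) else 0)" .
  have ci: "card (insert a U) = Suc (card U)" using insert by simp
  show ?case
  proof (cases "card U \<le> j")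
    case False then show ?thesis using eq ci by simp
  next
    case True
    show ?thesis
    proof (cases "j = card U")
      case True then show ?thesis using eq ci by simp
    next
      case False
      then obtain t where t: "j - card U = Suc t" using \<open>card U \<le> j\<close>
        by (metis Suc_diff_Suc le_neq_implies_less minus_nat.diff_0 not0_implies_Suc zero_less_diff)
      have "j - card (insert a U) = t" using t ci by simp
      moreover have "cc d (Suc t) - cc d' (Suc t) = cc d t" using d cc_diff by simp
      ultimately show ?thesis using eq ci t \<open>card U \<le> j\<close> False
        by (simp add: algebra_simps)
    qed
  qed
qed

context gfam begin

lemma psi_union:
  assumes S: "S \<subseteq> {1..n}" and Y: "Y \<subseteq> S" "is_clique E Y" and U: "U \<subseteq> nbhd E S Y"
  shows "psi U (adjoint (join_op E T Y) y) = psi (Y \<union> U) y"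
proof (cases "is_clique E U")
  case False
  then have "\<not> is_clique E (Y \<union> U)" by (auto simp: is_clique_def)
  then show ?thesis using False psi_nonclique by simp
next
  case True
  have fS: "finite S" using finite_subset[OF S finite_atLeastAtMost] .
  have US: "U \<subseteq> S" using U by (auto simp: nbhd_def)
  have fY: "finite Y" using finite_subset[OF Y(1) fS] .
  have fU: "finite U" using finite_subset[OF US fS] .
  have UY: "\<forall>j\<in>U. \<forall>k\<in>Y. E j k" using U by (auto simp: nbhd_def)
  have disj: "Y \<inter> U = {}" using UY irreflE by blast
  have cl: "is_clique E (Y \<union> U)" using True Y(2) UY symE by (auto simp: is_clique_def)
  have sl: "distinct (sorted_list_of_set V) \<and> set (sorted_list_of_set V) = V" if "finite V" for V :: "nat set"
    using that by simp
  have "weq (sorted_list_of_set (Y \<union> U)) (sorted_list_of_set Y @ sorted_list_of_set U)"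
  proof (rule weq_clique_perm)
    show "distinct (sorted_list_of_set (Y \<union> U))" using sl fY fU by blast
    show "distinct (sorted_list_of_set Y @ sorted_list_of_set U)" using sl[of Y] sl[of U] fY fU disj by auto
    show "set (sorted_list_of_set (Y \<union> U)) = set (sorted_list_of_set Y @ sorted_list_of_set U)"
      using sl[of Y] sl[of U] sl[of "Y \<union> U"] fY fU by auto
    show "\<forall>x\<in>set (sorted_list_of_set (Y \<union> U)). \<forall>y\<in>set (sorted_list_of_set (Y \<union> U)). x \<noteq> y \<longrightarrow> E x y"
      using cl sl[of "Y \<union> U"] fY fU by (auto simp: is_clique_def)
  qed
  moreover have "set (sorted_list_of_set (Y \<union> U)) \<subseteq> {1..n}" using fY fU Y US S by auto
  ultimately have "word_op T (sorted_list_of_set (Y \<union> U)) = word_op T (sorted_list_of_set Y) \<circ> word_op T (sorted_list_of_set U)"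
    using word_op_weq[of "sorted_list_of_set (Y \<union> U)"] word_op_append by simp
  then have e: "join_op E T (Y \<union> U) = join_op E T Y \<circ> join_op E T U"
    using cl True Y(2) by (simp add: join_op_clique)
  have YS: "Y \<subseteq> {1..n}" "U \<subseteq> {1..n}" using Y US S by auto
  have "adjoint (join_op E T (Y \<union> U)) = adjoint (join_op E T U) \<circ> adjoint (join_op E T Y)"
    unfolding e by (rule adjoint_comp[OF bl_join[OF YS(1)] bl_join[OF YS(2)]])
  then show ?thesis by (simp add: psi_def)
qed

definition Bq :: "nat set \<Rightarrow> nat set \<Rightarrow> 'a \<Rightarrow> real" where
  "Bq S Y y = (\<Sum>U\<in>Pow (nbhd E S Y). (-1)^card U * psi U (adjoint (join_op E T Y) y))"

definition ee :: "nat set \<Rightarrow> nat \<Rightarrow> nat \<Rightarrow> 'a \<Rightarrow> real" where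
  "ee S d j y = (\<Sum>Y\<in>Pow S. cc (d - card Y) j * Bq S Y y)"

lemma Bq_ext:
  assumes S: "S \<subseteq> {1..n}" and Y: "Y \<subseteq> S"
  shows "Bq S Y y = (\<Sum>U\<in>Pow (S - Y). (-1)^card U * psi (Y \<union> U) y)"
proof (cases "is_clique E Y")
  case False
  have "Bq S Y y = 0"
    unfolding Bq_def
  proof (rule sum.neutral, rule ballI)
    fix U assume "U \<in> Pow (nbhd E S Y)"
    then have "U \<subseteq> {1..n}" using S by (auto simp: nbhd_def)
    then show "(-1)^card U * psi U (adjoint (join_op E T Y) y) = 0"
      using False psi_zero by (simp add: join_op_def adjoint_zero)
  qed
  moreover have "(\<Sum>U\<in>Pow (S - Y). (-1)^card U * psi (Y \<union> U) y) = 0"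
  proof (rule sum.neutral, rule ballI)
    fix U assume "U \<in> Pow (S - Y)"
    have "\<not> is_clique E (Y \<union> U)" using False by (auto simp: is_clique_def)
    then show "(-1)^card U * psi (Y \<union> U) y = 0" using psi_nonclique by simp
  qed
  ultimately show ?thesis by simp
next
  case True
  have fS: "finite S" using finite_subset[OF S finite_atLeastAtMost] .
  have sub: "nbhd E S Y \<subseteq> S - Y" using irreflE by (auto simp: nbhd_def)
  have "Bq S Y y = (\<Sum>U\<in>Pow (nbhd E S Y). (-1)^card U * psi (Y \<union> U) y)"
    unfolding Bq_def using psi_union[OF S Y True] by simp
  also have "\<dots> = (\<Sum>U\<in>Pow (S - Y). (-1)^card U * psi (Y \<union> U) y)"
  proof (rule sum.mono_neutral_left)
    show "finite (Pow (S - Y))" using fS by simp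
    show "Pow (nbhd E S Y) \<subseteq> Pow (S - Y)" using sub by auto
    show "\<forall>U\<in>Pow (S - Y) - Pow (nbhd E S Y). (-1)^card U * psi (Y \<union> U) y = 0"
    proof
      fix U assume U: "U \<in> Pow (S - Y) - Pow (nbhd E S Y)"
      then obtain j where j: "j \<in> U" "j \<notin> nbhd E S Y" by auto
      then have "j \<in> S" "j \<notin> Y" using U by auto
      then obtain k where k: "k \<in> Y" "\<not> E j k" using j by (auto simp: nbhd_def)
      have "j \<noteq> k" using k \<open>j \<notin> Y\<close> by auto
      then have "\<not> is_clique E (Y \<union> U)" using j(1) k unfolding is_clique_def by blast
      then show "(-1)^card U * psi (Y \<union> U) y = 0" using psi_nonclique by simp
    qed
  qed
  finally show ?thesis .
qed

lemma ee_exp: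
  assumes S: "S \<subseteq> {1..n}"
  shows "ee S d j y = (\<Sum>U\<in>Pow S. psi U y * (\<Sum>Y\<in>Pow U. (-1)^(card U - card Y) * cc (d - card Y) j))"
proof -
  have fS: "finite S" using finite_subset[OF S finite_atLeastAtMost] .
  have step: "cc (d - card Y) j * Bq S Y y
      = (\<Sum>U\<in>{U\<in>Pow S. Y \<subseteq> U}. cc (d - card Y) j * ((-1)^(card U - card Y) * psi U y))"
    if Y: "Y \<in> Pow S" for Y
  proof -
    have YS: "Y \<subseteq> S" using Y by auto
    have fY: "finite Y" using finite_subset[OF YS fS] .
    have img: "(\<lambda>U. Y \<union> U) ` Pow (S - Y) = {U\<in>Pow S. Y \<subseteq> U}"
    proof
      show "(\<lambda>U. Y \<union> U) ` Pow (S - Y) \<subseteq> {U\<in>Pow S. Y \<subseteq> U}" using YS by auto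
      show "{U\<in>Pow S. Y \<subseteq> U} \<subseteq> (\<lambda>U. Y \<union> U) ` Pow (S - Y)"
      proof
        fix U assume "U \<in> {U\<in>Pow S. Y \<subseteq> U}"
        then have "U = Y \<union> (U - Y)" "U - Y \<in> Pow (S - Y)" by auto
        then show "U \<in> (\<lambda>U. Y \<union> U) ` Pow (S - Y)" by blast
      qed
    qed
    have inj: "inj_on (\<lambda>U. Y \<union> U) (Pow (S - Y))"
      by (rule inj_onI) blast
    have "(\<Sum>U\<in>{U\<in>Pow S. Y \<subseteq> U}. cc (d - card Y) j * ((-1)^(card U - card Y) * psi U y))
        = (\<Sum>U\<in>Pow (S - Y). cc (d - card Y) j * ((-1)^(card (Y \<union> U) - card Y) * psi (Y \<union> U) y))"
      unfolding img[symmetric] by (simp add: sum.reindex[OF inj])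
    also have "\<dots> = (\<Sum>U\<in>Pow (S - Y). cc (d - card Y) j * ((-1)^(card U) * psi (Y \<union> U) y))"
    proof (rule sum.cong[OF refl])
      fix U assume "U \<in> Pow (S - Y)"
      then have "finite U" "Y \<inter> U = {}" using finite_subset[OF _ fS, of U] by auto
      then have "card (Y \<union> U) - card Y = card U" using fY by (simp add: card_Un_disjoint)
      then show "cc (d - card Y) j * ((-1)^(card (Y \<union> U) - card Y) * psi (Y \<union> U) y) = cc (d - card Y) j * ((-1)^(card U) * psi (Y \<union> U) y)"
        by simp
    qed
    also have "\<dots> = cc (d - card Y) j * Bq S Y y"
      unfolding Bq_ext[OF S YS] by (simp add: sum_distrib_left)
    finally show ?thesis by simp
  qed
  have "ee S d j y = (\<Sum>Y\<in>Pow S. \<Sum>U\<in>{U\<in>Pow S. Y \<subseteq> U}. cc (d - card Y) j * ((-1)^(card U - card Y) * psi U y))"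
    unfolding ee_def using step by (rule sum.cong[OF refl])
  also have "\<dots> = (\<Sum>U\<in>Pow S. \<Sum>Y\<in>{Y\<in>Pow S. Y \<subseteq> U}. cc (d - card Y) j * ((-1)^(card U - card Y) * psi U y))"
    using fS by (intro sum.swap_restrict) auto
  also have "\<dots> = (\<Sum>U\<in>Pow S. psi U y * (\<Sum>Y\<in>Pow U. (-1)^(card U - card Y) * cc (d - card Y) j))"
  proof (rule sum.cong[OF refl])
    fix U assume "U \<in> Pow S"
    then have "{Y\<in>Pow S. Y \<subseteq> U} = Pow U" by auto
    then show "(\<Sum>Y\<in>{Y\<in>Pow S. Y \<subseteq> U}. cc (d - card Y) j * ((-1)^(card U - card Y) * psi U y))
       = psi U y * (\<Sum>Y\<in>Pow U. (-1)^(card U - card Y) * cc (d - card Y) j)"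
      by (simp add: sum_distrib_left algebra_simps)
  qed
  finally show ?thesis .
qed


definition Pm :: "nat set \<Rightarrow> nat \<Rightarrow> nat list set set" where
  "Pm S m = {p \<in> CS S. mlen p \<le> m}"

lemma CSk_eq: "CSk S m = {p \<in> CS S. mlen p = m}"
  by (auto simp: CSk_def CS_def mlen_cls)

lemma Pm_finite: "finite S \<Longrightarrow> finite (Pm S m)"
proof -
  assume fS: "finite S"
  have "Pm S m \<subseteq> (\<Union>j\<le>m. CSk S j)" by (auto simp: Pm_def CSk_eq)
  moreover have "finite (\<Union>j\<le>m. CSk S j)" using finite_CSk[OF fS] by auto
  ultimately show ?thesis using finite_subset by blast
qed

lemma Bq_nonclique: "S \<subseteq> {1..n} \<Longrightarrow> \<not> is_clique E Y \<Longrightarrow> Bq S Y y = 0"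
  unfolding Bq_def
proof (rule sum.neutral, rule ballI)
  fix U assume "S \<subseteq> {1..n}" "\<not> is_clique E Y" "U \<in> Pow (nbhd E S Y)"
  then have "U \<subseteq> {1..n}" by (auto simp: nbhd_def)
  then show "(-1)^card U * psi U (adjoint (join_op E T Y) y) = 0"
    using \<open>\<not> is_clique E Y\<close> psi_zero by (simp add: join_op_def adjoint_zero)
qed

lemma ee_nonneg:
  assumes S: "S \<subseteq> {1..n}"
    and H: "\<forall>Y. Y \<subseteq> S \<and> is_clique E Y \<longrightarrow> (\<forall>z. 0 \<le> (\<Sum>U\<in>Pow (nbhd E S Y). (-1)^card U * psi U z))"
  shows "0 \<le> ee S d j y"
  unfolding ee_def
proof (rule sum_nonneg)
  fix Y assume "Y \<in> Pow S"
  then have YS: "Y \<subseteq> S" by simp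
  have "0 \<le> Bq S Y y"
  proof (cases "is_clique E Y")
    case True then show ?thesis using H YS unfolding Bq_def by blast
  next
    case False then show ?thesis using Bq_nonclique[OF S] by simp
  qed
  then show "0 \<le> cc (d - card Y) j * Bq S Y y" using cc_nonneg by simp
qed

lemma ee_zero:
  assumes S: "S \<subseteq> {1..n}" and dS: "\<forall>U. U \<subseteq> S \<and> is_clique E U \<longrightarrow> card U \<le> d"
  shows "ee S d 0 y = norm y ^ 2"
proof -
  have fS: "finite S" using finite_subset[OF S finite_atLeastAtMost] .
  have "ee S d 0 y = (\<Sum>U\<in>Pow S. (if U = {} then psi {} y else 0))"
    unfolding ee_exp[OF S]
  proof (rule sum.cong[OF refl])
    fix U assume U: "U \<in> Pow S"
    have fU: "finite U" using U finite_subset[OF _ fS] by auto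
    show "psi U y * (\<Sum>Y\<in>Pow U. (-1)^(card U - card Y) * cc (d - card Y) 0) = (if U = {} then psi {} y else 0)"
    proof (cases "is_clique E U")
      case False
      then have "U \<noteq> {}" by (auto simp: is_clique_def)
      then show ?thesis using False psi_nonclique by simp
    next
      case True
      then have "card U \<le> d" using dS U by auto
      from beta[OF fU this, of 0] show ?thesis using fU by auto
    qed
  qed
  also have "\<dots> = psi {} y" using fS by simp
  finally show ?thesis by (simp add: psi_empty)
qed

lemma main_ident:
  assumes S: "S \<subseteq> {1..n}" and dS: "\<forall>U. U \<subseteq> S \<and> is_clique E U \<longrightarrow> card U \<le> d"
  shows "(\<Sum>p\<in>Pm S m. ee S d (m - mlen p) (Aop p h)) = cc d m * norm h ^ 2"
proof -
  have fS: "finite S" using finite_subset[OF S finite_atLeastAtMost] .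
  define G where "G = (\<lambda>x::nat list set \<times> nat set. (-1)^card (snd x) * psi (snd x) (Aop (fst x) h) * cc d (m - (mlen (fst x) + card (snd x))))"
  define P where "P = (\<lambda>x::nat list set \<times> nat set. is_clique E (snd x) \<and> mlen (fst x) + card (snd x) \<le> m)"
  have step1: "ee S d (m - mlen p) (Aop p h) = (\<Sum>U\<in>Pow S. if P (p, U) then G (p, U) else 0)"
    if p: "p \<in> Pm S m" for p
  proof -
    have pm: "mlen p \<le> m" using p by (simp add: Pm_def)
    show ?thesis unfolding ee_exp[OF S]
    proof (rule sum.cong[OF refl])
      fix U assume U: "U \<in> Pow S"
      have fU: "finite U" using U finite_subset[OF _ fS] by auto
      show "psi U (Aop p h) * (\<Sum>Y\<in>Pow U. (-1)^(card U - card Y) * cc (d - card Y) (m - mlen p))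
            = (if P (p, U) then G (p, U) else 0)"
      proof (cases "is_clique E U")
        case False then show ?thesis using psi_nonclique by (simp add: P_def)
      next
        case True
        then have "card U \<le> d" using dS U by auto
        from beta[OF fU this, of "m - mlen p"]
        have b: "(\<Sum>Y\<in>Pow U. (-1::real)^(card U - card Y) * cc (d - card Y) (m - mlen p))
           = (if card U \<le> m - mlen p then (-1)^card U * cc d (m - mlen p - card U) else 0)" .
        have e1: "(card U \<le> m - mlen p) = (mlen p + card U \<le> m)" using pm by auto
        have e2: "m - mlen p - card U = m - (mlen p + card U)" by simp
        show ?thesis unfolding b e1 e2 using True by (simp add: P_def G_def)
      qed
    qed
  qed
  have "(\<Sum>p\<in>Pm S m. ee S d (m - mlen p) (Aop p h)) = (\<Sum>p\<in>Pm S m. \<Sum>U\<in>Pow S. if P (p, U) then G (p, U) else 0)"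
    using step1 by (rule sum.cong[OF refl])
  also have "\<dots> = (\<Sum>x\<in>Pm S m \<times> Pow S. if P x then G x else 0)"
    by (simp add: sum.cartesian_product)
  also have "\<dots> = (\<Sum>x\<in>{x\<in>Pm S m \<times> Pow S. P x}. G x)"
    using Pm_finite[OF fS] fS by (simp add: sum.inter_filter)
  also have "\<dots> = (\<Sum>k\<in>{..m}. \<Sum>x\<in>{x\<in>{x\<in>Pm S m \<times> Pow S. P x}. mlen (fst x) + card (snd x) = k}. G x)"
    using Pm_finite[OF fS] fS
    by (intro sum.group[symmetric]) (auto simp: P_def)
  also have "\<dots> = (\<Sum>k\<in>{..m}. \<Sum>x\<in>Pk S k. G x)"
  proof (rule sum.cong[OF refl])
    fix k assume "k \<in> {..m}"
    then have "{x\<in>{x\<in>Pm S m \<times> Pow S. P x}. mlen (fst x) + card (snd x) = k} = Pk S k"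
      by (auto simp: Pk_def Pm_def P_def)
    then show "(\<Sum>x\<in>{x\<in>{x\<in>Pm S m \<times> Pow S. P x}. mlen (fst x) + card (snd x) = k}. G x) = (\<Sum>x\<in>Pk S k. G x)"
      by simp
  qed
  also have "\<dots> = (\<Sum>k\<in>{..m}. cc d (m - k) * (if k = 0 then norm h ^ 2 else 0))"
  proof (rule sum.cong[OF refl])
    fix k assume "k \<in> {..m}"
    have "(\<Sum>x\<in>Pk S k. G x) = (\<Sum>x\<in>Pk S k. cc d (m - k) * ((-1)^card (snd x) * psi (snd x) (Aop (fst x) h)))"
      by (rule sum.cong[OF refl]) (auto simp: G_def Pk_def)
    also have "\<dots> = cc d (m - k) * (if k = 0 then norm h ^ 2 else 0)"
      by (simp add: sum_distrib_left[symmetric] ident[OF S])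
    finally show "(\<Sum>x\<in>Pk S k. G x) = cc d (m - k) * (if k = 0 then norm h ^ 2 else 0)" .
  qed
  also have "\<dots> = (\<Sum>k\<in>{..m}. if k = 0 then cc d m * norm h ^ 2 else 0)"
    by (rule sum.cong) auto
  also have "\<dots> = cc d m * norm h ^ 2" by simp
  finally show ?thesis .
qed

lemma level_bound:
  assumes S: "S \<subseteq> {1..n}" and dS: "\<forall>U. U \<subseteq> S \<and> is_clique E U \<longrightarrow> card U \<le> d"
    and H: "\<forall>Y. Y \<subseteq> S \<and> is_clique E Y \<longrightarrow> (\<forall>z. 0 \<le> (\<Sum>U\<in>Pow (nbhd E S Y). (-1)^card U * psi U z))"
  shows "(\<Sum>p\<in>CSk S m. norm (Aop p h) ^ 2) \<le> cc d m * norm h ^ 2"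
proof -
  have fS: "finite S" using finite_subset[OF S finite_atLeastAtMost] .
  have "(\<Sum>p\<in>CSk S m. norm (Aop p h) ^ 2) = (\<Sum>p\<in>CSk S m. ee S d (m - mlen p) (Aop p h))"
  proof (rule sum.cong[OF refl])
    fix p assume "p \<in> CSk S m"
    then have "mlen p = m" by (simp add: CSk_eq)
    then show "norm (Aop p h) ^ 2 = ee S d (m - mlen p) (Aop p h)" using ee_zero[OF S dS] by simp
  qed
  also have "\<dots> \<le> (\<Sum>p\<in>Pm S m. ee S d (m - mlen p) (Aop p h))"
    using Pm_finite[OF fS] ee_nonneg[OF S H]
    by (intro sum_mono2) (auto simp: CSk_eq Pm_def)
  also have "\<dots> = cc d m * norm h ^ 2" by (rule main_ident[OF S dS])
  finally show ?thesis .
qed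

lemma weighted_bound:
  assumes S: "S \<subseteq> {1..n}" and dS: "\<forall>U. U \<subseteq> S \<and> is_clique E U \<longrightarrow> card U \<le> d"
    and H: "\<forall>Y. Y \<subseteq> S \<and> is_clique E Y \<longrightarrow> (\<forall>z. 0 \<le> (\<Sum>U\<in>Pow (nbhd E S Y). (-1)^card U * psi U z))"
    and s: "0 \<le> s" "s < (1::real)"
    and F: "finite F" "F \<subseteq> CS S"
  shows "(\<Sum>p\<in>F. s ^ mlen p * norm (Aop p h) ^ 2) \<le> norm h ^ 2 / (1 - s) ^ d"
proof -
  have fS: "finite S" using finite_subset[OF S finite_atLeastAtMost] .
  define N where "N = Max (insert 0 (mlen ` F))"
  have FN: "F \<subseteq> Pm S N" using F by (auto simp: Pm_def N_def)
  have "(\<Sum>p\<in>F. s ^ mlen p * norm (Aop p h) ^ 2) \<le> (\<Sum>p\<in>Pm S N. s ^ mlen p * norm (Aop p h) ^ 2)"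
    using Pm_finite[OF fS] FN s by (intro sum_mono2) auto
  also have "\<dots> = (\<Sum>m\<in>{..N}. \<Sum>p\<in>{p\<in>Pm S N. mlen p = m}. s ^ mlen p * norm (Aop p h) ^ 2)"
    using Pm_finite[OF fS] by (intro sum.group[symmetric]) (auto simp: Pm_def)
  also have "\<dots> = (\<Sum>m\<in>{..N}. s ^ m * (\<Sum>p\<in>CSk S m. norm (Aop p h) ^ 2))"
  proof (rule sum.cong[OF refl])
    fix m assume "m \<in> {..N}"
    then have "{p\<in>Pm S N. mlen p = m} = CSk S m" by (auto simp: Pm_def CSk_eq)
    then show "(\<Sum>p\<in>{p\<in>Pm S N. mlen p = m}. s ^ mlen p * norm (Aop p h) ^ 2) = s ^ m * (\<Sum>p\<in>CSk S m. norm (Aop p h) ^ 2)"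
      by (simp add: sum_distrib_left CSk_eq)
  qed
  also have "\<dots> \<le> (\<Sum>m\<in>{..N}. s ^ m * (cc d m * norm h ^ 2))"
    using level_bound[OF S dS H] s by (intro sum_mono mult_left_mono) auto
  also have "\<dots> = (\<Sum>m\<le>N. cc d m * s ^ m) * norm h ^ 2"
    unfolding sum_distrib_right by (rule sum.cong) (auto simp: mult_ac)
  also have "\<dots> \<le> (1 / (1 - s) ^ d) * norm h ^ 2"
    using cc_partial[OF s] by (intro mult_right_mono) auto
  finally show ?thesis by simp
qed


lemma prj_filter: "prj a b (filter P w) = filter P (prj a b w)"
  unfolding prj_def filter_filter by (rule filter_cong) auto

lemma filter_weq: "weq w w' \<Longrightarrow> weq (filter P w) (filter P w')"
  unfolding weq_iff prj_filter by simp

lemma split_weq: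
  assumes w: "set w \<subseteq> A \<union> B" and disj: "A \<inter> B = {}" and AB: "\<forall>a\<in>A. \<forall>b\<in>B. E a b"
  shows "weq w (filter (\<lambda>x. x \<in> A) w @ filter (\<lambda>x. x \<in> B) w)"
  unfolding weq_iff
proof (intro allI impI)
  fix a b assume nab: "\<not> E a b"
  have nba: "\<not> E b a" using nab symE by blast
  have pa: "prj a b (filter (\<lambda>x. x \<in> A) w @ filter (\<lambda>x. x \<in> B) w)
      = filter (\<lambda>x. (x = a \<or> x = b) \<and> x \<in> A) w @ filter (\<lambda>x. (x = a \<or> x = b) \<and> x \<in> B) w"
    unfolding prj_def filter_append filter_filter by (intro arg_cong2[where f="(@)"] filter_cong) auto
  show "prj a b w = prj a b (filter (\<lambda>x. x \<in> A) w @ filter (\<lambda>x. x \<in> B) w)"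
  proof (cases "a \<in> A \<or> b \<in> A")
    case True
    have nB: "a \<notin> B" "b \<notin> B"
    proof -
      show "a \<notin> B"
      proof
        assume aB: "a \<in> B"
        then have "a \<notin> A" using disj by blast
        then have "b \<in> A" using True by blast
        then show False using AB aB nba by blast
      qed
      show "b \<notin> B"
      proof
        assume bB: "b \<in> B"
        then have "b \<notin> A" using disj by blast
        then have "a \<in> A" using True by blast
        then show False using AB bB nab by blast
      qed
    qed
    have "filter (\<lambda>x. (x = a \<or> x = b) \<and> x \<in> B) w = []"
      using nB by (auto simp: filter_empty_conv)
    moreover have "filter (\<lambda>x. (x = a \<or> x = b) \<and> x \<in> A) w = filter (\<lambda>x. x = a \<or> x = b) w"
      using w nB by (intro filter_cong) auto
    ultimately show ?thesis using pa by (simp add: prj_def)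
  next
    case False
    have "filter (\<lambda>x. (x = a \<or> x = b) \<and> x \<in> A) w = []"
      using False by (auto simp: filter_empty_conv)
    moreover have "filter (\<lambda>x. (x = a \<or> x = b) \<and> x \<in> B) w = filter (\<lambda>x. x = a \<or> x = b) w"
      using w False by (intro filter_cong) auto
    ultimately show ?thesis using pa by (simp add: prj_def)
  qed
qed

lemma Aop_comp:
  assumes "set u \<subseteq> {1..n}" "set v \<subseteq> {1..n}"
  shows "Aop (cls (u @ v)) = Aop (cls v) \<circ> Aop (cls u)"
proof -
  have "mon_op T (cls (u @ v)) = mon_op T (cls u) \<circ> mon_op T (cls v)"
    using assms by (simp add: mon_op_cls word_op_append)
  then show ?thesis unfolding Aop_def using assms
    by (simp add: adjoint_comp mon_op_cls bl_word)
qed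

lemma prod_bound:
  assumes A: "A \<subseteq> {1..n}" and B: "B \<subseteq> {1..n}" and disj: "A \<inter> B = {}"
    and AB: "\<forall>a\<in>A. \<forall>b\<in>B. E a b" and s: "0 \<le> s" and KB0: "0 \<le> KB"
    and KA: "\<And>F y. finite F \<Longrightarrow> F \<subseteq> CS A \<Longrightarrow> (\<Sum>p\<in>F. s ^ mlen p * norm (Aop p y) ^ 2) \<le> KA * norm y ^ 2"
    and KB: "\<And>F y. finite F \<Longrightarrow> F \<subseteq> CS B \<Longrightarrow> (\<Sum>p\<in>F. s ^ mlen p * norm (Aop p y) ^ 2) \<le> KB * norm y ^ 2"
    and F: "finite F" "F \<subseteq> CS (A \<union> B)"
  shows "(\<Sum>p\<in>F. s ^ mlen p * norm (Aop p y) ^ 2) \<le> KA * KB * norm y ^ 2"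
proof -
  define fA where "fA = (\<lambda>w. filter (\<lambda>x. x \<in> A) w)"
  define fB where "fB = (\<lambda>w. filter (\<lambda>x. x \<in> B) w)"
  define \<pi> where "\<pi> = (\<lambda>q. (cls (fA (rep q)), cls (fB (rep q))))"
  have facts: "\<pi> q = (cls (fA w), cls (fB w)) \<and> q = cls (fA w @ fB w) \<and> set (fA w) \<subseteq> A \<and> set (fB w) \<subseteq> B"
    if "q = cls w" "set w \<subseteq> A \<union> B" for q w
  proof -
    have "weq w (rep q)" using that rep_cls by simp
    then have "weq (fA w) (fA (rep q))" "weq (fB w) (fB (rep q))"
      unfolding fA_def fB_def by (auto intro: filter_weq)
    then have "cls (fA (rep q)) = cls (fA w)" "cls (fB (rep q)) = cls (fB w)"
      unfolding cls_eq_iff by (auto intro: weq_sym[of _ "fA (rep q)"] weq_sym[of _ "fB (rep q)"])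
    moreover have "q = cls (fA w @ fB w)"
    proof -
      have "weq w (fA w @ fB w)" unfolding fA_def fB_def by (rule split_weq[OF that(2) disj AB])
      then show ?thesis using that(1) cls_eq_iff by simp
    qed
    ultimately show ?thesis by (auto simp: \<pi>_def fA_def fB_def)
  qed
  have inj: "inj_on \<pi> F"
  proof (rule inj_onI)
    fix q q' assume q: "q \<in> F" and q': "q' \<in> F" and e: "\<pi> q = \<pi> q'"
    obtain w where w: "q = cls w" "set w \<subseteq> A \<union> B" using q F by (auto simp: CS_def)
    obtain w' where w': "q' = cls w'" "set w' \<subseteq> A \<union> B" using q' F by (auto simp: CS_def)
    have "cls (fA w) = cls (fA w')" "cls (fB w) = cls (fB w')" using facts[OF w] facts[OF w'] e by auto
    then have "weq (fA w @ fB w) (fA w' @ fB w')" unfolding cls_eq_iff by (rule weq_append)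
    then have "cls (fA w @ fB w) = cls (fA w' @ fB w')" by (simp add: cls_eq_iff)
    then show "q = q'" using facts[OF w] facts[OF w'] by simp
  qed
  define g where "g = (\<lambda>x::nat list set \<times> nat list set. s ^ mlen (fst x) * (s ^ mlen (snd x) * norm (Aop (snd x) (Aop (fst x) y)) ^ 2))"
  have fq: "s ^ mlen q * norm (Aop q y) ^ 2 = g (\<pi> q)" if qF: "q \<in> F" for q
  proof -
    obtain w where w: "q = cls w" "set w \<subseteq> A \<union> B" using qF F by (auto simp: CS_def)
    have f: "\<pi> q = (cls (fA w), cls (fB w))" "q = cls (fA w @ fB w)" "set (fA w) \<subseteq> A" "set (fB w) \<subseteq> B"
      using facts[OF w] by auto
    have sub: "set (fA w) \<subseteq> {1..n}" "set (fB w) \<subseteq> {1..n}" using f A B by auto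
    have "Aop q = Aop (cls (fB w)) \<circ> Aop (cls (fA w))" using f(2) Aop_comp[OF sub] by simp
    moreover have "mlen q = mlen (cls (fA w)) + mlen (cls (fB w))" using f(2) by (simp add: mlen_cls)
    ultimately show ?thesis using f(1) by (simp add: g_def power_add mult_ac)
  qed
  define FA where "FA = fst ` \<pi> ` F"
  define FB where "FB = snd ` \<pi> ` F"
  have FA: "finite FA" "FA \<subseteq> CS A" and FB: "finite FB" "FB \<subseteq> CS B"
  proof -
    show "finite FA" "finite FB" using F by (auto simp: FA_def FB_def)
    show "FA \<subseteq> CS A"
    proof
      fix a assume "a \<in> FA"
      then obtain q where q: "q \<in> F" "a = fst (\<pi> q)" by (auto simp: FA_def)
      obtain w where w: "q = cls w" "set w \<subseteq> A \<union> B" using q F by (auto simp: CS_def)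
      show "a \<in> CS A" using facts[OF w] q by (auto simp: CS_def)
    qed
    show "FB \<subseteq> CS B"
    proof
      fix a assume "a \<in> FB"
      then obtain q where q: "q \<in> F" "a = snd (\<pi> q)" by (auto simp: FB_def)
      obtain w where w: "q = cls w" "set w \<subseteq> A \<union> B" using q F by (auto simp: CS_def)
      show "a \<in> CS B" using facts[OF w] q by (auto simp: CS_def)
    qed
  qed
  have "(\<Sum>p\<in>F. s ^ mlen p * norm (Aop p y) ^ 2) = (\<Sum>q\<in>F. g (\<pi> q))"
    using fq by (rule sum.cong[OF refl])
  also have "\<dots> = (\<Sum>x\<in>\<pi> ` F. g x)" using sum.reindex[OF inj, of g] by (simp add: o_def)
  also have "\<dots> \<le> (\<Sum>x\<in>FA \<times> FB. g x)"
  proof (rule sum_mono2)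
    show "finite (FA \<times> FB)" using FA FB by simp
    show "\<pi> ` F \<subseteq> FA \<times> FB"
    proof
      fix x assume x: "x \<in> \<pi> ` F"
      have "fst x \<in> FA" unfolding FA_def using x by (rule imageI)
      moreover have "snd x \<in> FB" unfolding FB_def using x by (rule imageI)
      ultimately show "x \<in> FA \<times> FB" by (simp add: mem_Times_iff)
    qed
    show "\<And>x. x \<in> FA \<times> FB - \<pi> ` F \<Longrightarrow> 0 \<le> g x" using s by (auto simp: g_def)
  qed
  also have "\<dots> = (\<Sum>a\<in>FA. s ^ mlen a * (\<Sum>b\<in>FB. s ^ mlen b * norm (Aop b (Aop a y)) ^ 2))"
    unfolding sum.cartesian_product' by (simp add: g_def sum_distrib_left)
  also have "\<dots> \<le> (\<Sum>a\<in>FA. s ^ mlen a * (KB * norm (Aop a y) ^ 2))"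
    using KB[OF FB] s by (intro sum_mono mult_left_mono) auto
  also have "\<dots> = KB * (\<Sum>a\<in>FA. s ^ mlen a * norm (Aop a y) ^ 2)"
    by (simp add: sum_distrib_left mult_ac)
  also have "\<dots> \<le> KB * (KA * norm y ^ 2)"
    using KA[OF FA] KB0 by (rule mult_left_mono)
  finally show ?thesis by (simp add: mult_ac)
qed

end



context gfam begin

abbreviation CC where "CC \<equiv> compl_components n E"
abbreviation R where "R \<equiv> compl_edge n E"

lemma R_sym: "R a b \<Longrightarrow> R b a"
  using symE by (auto simp: compl_edge_def)

lemma Rs_sym: "R\<^sup>*\<^sup>* a b \<Longrightarrow> R\<^sup>*\<^sup>* b a"
proof (induction rule: rtranclp_induct)
  case base then show ?case by simp
next
  case (step y z)
  then show ?case using R_sym by (meson converse_rtranclp_into_rtranclp)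
qed

lemma Rs_range: "R\<^sup>*\<^sup>* i j \<Longrightarrow> i \<in> {1..n} \<Longrightarrow> j \<in> {1..n}"
  by (induction rule: rtranclp_induct) (auto simp: compl_edge_def)

lemma CC_finite: "finite CC"
  by (simp add: compl_components_def)

lemma CC_sub: "V \<in> CC \<Longrightarrow> V \<subseteq> {1..n}"
  using Rs_range by (auto simp: compl_components_def)

lemma CC_Union: "\<Union>CC = {1..n}"
proof
  show "\<Union>CC \<subseteq> {1..n}" using CC_sub by blast
  show "{1..n} \<subseteq> \<Union>CC"
  proof
    fix i assume "i \<in> {1..n}"
    then have "i \<in> {j. R\<^sup>*\<^sup>* i j}" "{j. R\<^sup>*\<^sup>* i j} \<in> CC" by (auto simp: compl_components_def)
    then show "i \<in> \<Union>CC" by blast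
  qed
qed

lemma CC_disj:
  assumes V: "V \<in> CC" and V': "V' \<in> CC" and ne: "V \<noteq> V'"
  shows "V \<inter> V' = {}"
proof (rule ccontr)
  assume "V \<inter> V' \<noteq> {}"
  then obtain j where j: "j \<in> V" "j \<in> V'" by blast
  obtain i where i: "V = {k. R\<^sup>*\<^sup>* i k}" using V by (auto simp: compl_components_def)
  obtain i' where i': "V' = {k. R\<^sup>*\<^sup>* i' k}" using V' by (auto simp: compl_components_def)
  have "R\<^sup>*\<^sup>* i j" "R\<^sup>*\<^sup>* i' j" using j i i' by auto
  then have a: "R\<^sup>*\<^sup>* i i'" and b: "R\<^sup>*\<^sup>* i' i"
    using Rs_sym[of i' j] Rs_sym[of i j] rtranclp_trans[of R i j i'] rtranclp_trans[of R i' j i] by auto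
  have "V = V'" unfolding i i' using a b rtranclp_trans[of R i i'] rtranclp_trans[of R i' i] by blast
  then show False using ne by simp
qed

lemma CC_adj:
  assumes V: "V \<in> CC" and V': "V' \<in> CC" and ne: "V \<noteq> V'" and a: "a \<in> V" and b: "b \<in> V'"
  shows "E a b"
proof (rule ccontr)
  assume nE: "\<not> E a b"
  have ab: "a \<in> {1..n}" "b \<in> {1..n}" using a b CC_sub[OF V] CC_sub[OF V'] by blast+
  have "a \<noteq> b" using CC_disj[OF V V' ne] a b by auto
  then have "R a b" using ab nE by (simp add: compl_edge_def)
  obtain i where i: "V = {k. R\<^sup>*\<^sup>* i k}" using V by (auto simp: compl_components_def)
  have "R\<^sup>*\<^sup>* i a" using a i by auto
  then have "R\<^sup>*\<^sup>* i b" using \<open>R a b\<close> by (rule rtranclp.rtrancl_into_rtrancl)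
  then have "b \<in> V" using i by auto
  then show False using CC_disj[OF V V' ne] b by auto
qed

definition dV :: "nat set \<Rightarrow> nat" where
  "dV V = Max (card ` {W. W \<subseteq> V \<and> is_clique E W})"

lemma dV_ge: "V \<subseteq> {1..n} \<Longrightarrow> U \<subseteq> V \<Longrightarrow> is_clique E U \<Longrightarrow> card U \<le> dV V"
proof -
  assume V: "V \<subseteq> {1..n}" and U: "U \<subseteq> V" "is_clique E U"
  have fV: "finite V" using finite_subset[OF V finite_atLeastAtMost] .
  have "finite {W. W \<subseteq> V \<and> is_clique E W}" by (rule finite_subset[of _ "Pow V"]) (auto simp: fV)
  then show ?thesis unfolding dV_def using U by (intro Max_ge) auto
qed

lemma dV_attained: "V \<subseteq> {1..n} \<Longrightarrow> \<exists>W. W \<subseteq> V \<and> is_clique E W \<and> card W = dV V"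
proof -
  assume V: "V \<subseteq> {1..n}"
  have fV: "finite V" using finite_subset[OF V finite_atLeastAtMost] .
  have fin: "finite {W. W \<subseteq> V \<and> is_clique E W}" by (rule finite_subset[of _ "Pow V"]) (auto simp: fV)
  have ne: "{W. W \<subseteq> V \<and> is_clique E W} \<noteq> {}" by (auto simp: is_clique_def)
  have "dV V \<in> card ` {W. W \<subseteq> V \<and> is_clique E W}"
    unfolding dV_def using fin ne by (intro Max_in) auto
  then show ?thesis by auto
qed

lemma sum_dV: "(\<Sum>V\<in>CC. dV V) \<le> clique_number n E"
proof -
  have "\<forall>V\<in>CC. \<exists>W. W \<subseteq> V \<and> is_clique E W \<and> card W = dV V" using dV_attained CC_sub by blast
  then obtain Wf where Wf: "\<And>V. V \<in> CC \<Longrightarrow> Wf V \<subseteq> V \<and> is_clique E (Wf V) \<and> card (Wf V) = dV V"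
    by metis
  define W where "W = \<Union>(Wf ` CC)"
  have Wsub: "W \<subseteq> {1..n}"
  proof
    fix x assume "x \<in> W"
    then obtain V where "V \<in> CC" "x \<in> Wf V" by (auto simp: W_def)
    then show "x \<in> {1..n}" using Wf CC_sub by blast
  qed
  have Wcl: "is_clique E W"
    unfolding is_clique_def
  proof (intro ballI impI)
    fix i j assume i: "i \<in> W" and j: "j \<in> W" and ij: "i \<noteq> j"
    obtain V where V: "V \<in> CC" "i \<in> Wf V" using i by (auto simp: W_def)
    obtain V' where V': "V' \<in> CC" "j \<in> Wf V'" using j by (auto simp: W_def)
    show "E i j"
    proof (cases "V = V'")
      case True then show ?thesis using Wf[OF V(1)] V V' ij by (auto simp: is_clique_def)
    next
      case False then show ?thesis using CC_adj[OF V(1) V'(1)] Wf V V' by blast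
    qed
  qed
  have fin: "\<forall>V\<in>CC. finite (Wf V)"
  proof
    fix V assume "V \<in> CC"
    then have "Wf V \<subseteq> {1..n}" using Wf CC_sub by blast
    then show "finite (Wf V)" using finite_subset[OF _ finite_atLeastAtMost] by blast
  qed
  have disj: "\<forall>V\<in>CC. \<forall>V'\<in>CC. V \<noteq> V' \<longrightarrow> Wf V \<inter> Wf V' = {}"
  proof (intro ballI impI)
    fix V V' assume "V \<in> CC" "V' \<in> CC" "V \<noteq> V'"
    then have "V \<inter> V' = {}" "Wf V \<subseteq> V" "Wf V' \<subseteq> V'" using CC_disj Wf by auto
    then show "Wf V \<inter> Wf V' = {}" by blast
  qed
  have "card W = (\<Sum>V\<in>CC. card (Wf V))"
    unfolding W_def by (rule card_UN_disjoint[OF CC_finite fin disj])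
  also have "\<dots> = (\<Sum>V\<in>CC. dV V)" using Wf by simp
  finally have cW: "card W = (\<Sum>V\<in>CC. dV V)" .
  have "finite {W. W \<subseteq> {1..n} \<and> is_clique E W}"
    by (rule finite_subset[of _ "Pow {1..n}"]) auto
  then have "card W \<le> clique_number n E"
    unfolding clique_number_def using Wsub Wcl by (intro Max_ge) auto
  then show ?thesis using cW by simp
qed

lemma brehmer_H:
  assumes br: "weak_brehmer n E T" and V: "V \<in> CC"
  shows "\<forall>Y. Y \<subseteq> V \<and> is_clique E Y \<longrightarrow> (\<forall>z. 0 \<le> (\<Sum>U\<in>Pow (nbhd E V Y). (-1)^card U * psi U z))"
proof (intro allI impI)
  fix Y z assume Y: "Y \<subseteq> V \<and> is_clique E Y"
  have pos: "positive_op (\<lambda>h. \<Sum>U \<in> Pow (nbhd E V Y). (-1) ^ card U *\<^sub>R join_op E T U (adjoint (join_op E T U) h))"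
    using br V Y unfolding weak_brehmer_def by blast
  then have "0 \<le> inner (\<Sum>U \<in> Pow (nbhd E V Y). (-1) ^ card U *\<^sub>R join_op E T U (adjoint (join_op E T U) z)) z"
    unfolding positive_op_def by blast
  also have "\<dots> = (\<Sum>U\<in>Pow (nbhd E V Y). (-1)^card U * psi U z)"
    unfolding inner_sum_left
  proof (rule sum.cong[OF refl])
    fix U assume "U \<in> Pow (nbhd E V Y)"
    then have "U \<subseteq> {1..n}" using CC_sub[OF V] by (auto simp: nbhd_def)
    then show "inner ((-1) ^ card U *\<^sub>R join_op E T U (adjoint (join_op E T U) z)) z = (-1)^card U * psi U z"
      using adjoint_norm_sq[OF bl_join] by (simp add: psi_def)
  qed
  finally show "0 \<le> (\<Sum>U\<in>Pow (nbhd E V Y). (-1)^card U * psi U z)" .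
qed

lemma CS_empty: "CS {} = {cls []}"
proof -
  have "{w::nat list. set w \<subseteq> {}} = {[]}" by auto
  then show ?thesis by (simp add: CS_def)
qed

lemma assembly:
  assumes br: "weak_brehmer n E T" and s: "0 \<le> s" "s < (1::real)"
    and C: "finite C" "C \<subseteq> CC"
  shows "\<And>F y. finite F \<Longrightarrow> F \<subseteq> CS (\<Union>C) \<Longrightarrow>
      (\<Sum>p\<in>F. s ^ mlen p * norm (Aop p y) ^ 2) \<le> (\<Prod>V\<in>C. 1 / (1 - s) ^ dV V) * norm y ^ 2"
  using C
proof (induction C rule: finite_induct)
  case empty
  fix F y assume F: "finite F" "F \<subseteq> CS (\<Union>{})"
  then have "F \<subseteq> {cls []}" using CS_empty by simp
  then have "(\<Sum>p\<in>F. s ^ mlen p * norm (Aop p y) ^ 2) \<le> (\<Sum>p\<in>{cls []}. s ^ mlen p * norm (Aop p y) ^ 2)"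
    using s by (intro sum_mono2) auto
  also have "\<dots> = norm y ^ 2" by (simp add: mlen_cls Aop_Nil)
  finally show "(\<Sum>p\<in>F. s ^ mlen p * norm (Aop p y) ^ 2) \<le> (\<Prod>V\<in>{}. 1 / (1 - s) ^ dV V) * norm y ^ 2" by simp
next
  case (insert V C)
  fix F y assume F: "finite F" "F \<subseteq> CS (\<Union>(insert V C))"
  have VC: "V \<in> CC" and CCC: "C \<subseteq> CC" using insert.prems by auto
  have A: "V \<subseteq> {1..n}" using CC_sub[OF VC] .
  have B: "\<Union>C \<subseteq> {1..n}" using CC_sub CCC by blast
  have disj: "V \<inter> \<Union>C = {}"
  proof -
    have "V \<inter> V' = {}" if "V' \<in> C" for V'
      using CC_disj[OF VC] that CCC insert.hyps(2) by blast
    then show ?thesis by blast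
  qed
  have AB: "\<forall>a\<in>V. \<forall>b\<in>\<Union>C. E a b"
  proof (intro ballI)
    fix a b assume a: "a \<in> V" and b: "b \<in> \<Union>C"
    then obtain V' where V': "V' \<in> C" "b \<in> V'" by blast
    have "V \<noteq> V'" using V' insert.hyps(2) by blast
    then show "E a b" using CC_adj[OF VC _ _ a V'(2)] V' CCC by blast
  qed
  have KB0: "0 \<le> (\<Prod>V\<in>C. 1 / (1 - s) ^ dV V)" using s by (intro prod_nonneg) simp
  have KA: "(\<Sum>p\<in>F'. s ^ mlen p * norm (Aop p y') ^ 2) \<le> 1 / (1 - s) ^ dV V * norm y' ^ 2"
    if "finite F'" "F' \<subseteq> CS V" for F' y'
  proof -
    have "(\<Sum>p\<in>F'. s ^ mlen p * norm (Aop p y') ^ 2) \<le> norm y' ^ 2 / (1 - s) ^ dV V"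
      by (rule weighted_bound[OF A _ brehmer_H[OF br VC] s that]) (use dV_ge[OF A] in blast)
    then show ?thesis by simp
  qed
  have KB: "(\<Sum>p\<in>F'. s ^ mlen p * norm (Aop p y') ^ 2) \<le> (\<Prod>V\<in>C. 1 / (1 - s) ^ dV V) * norm y' ^ 2"
    if "finite F'" "F' \<subseteq> CS (\<Union>C)" for F' y'
    using insert.IH CCC that by blast
  have "F \<subseteq> CS (V \<union> \<Union>C)" using F by simp
  from prod_bound[OF A B disj AB s(1) KB0 KA KB F(1) this]
  have "(\<Sum>p\<in>F. s ^ mlen p * norm (Aop p y) ^ 2) \<le> 1 / (1 - s) ^ dV V * (\<Prod>V\<in>C. 1 / (1 - s) ^ dV V) * norm y ^ 2" .
  then show "(\<Sum>p\<in>F. s ^ mlen p * norm (Aop p y) ^ 2) \<le> (\<Prod>V\<in>insert V C. 1 / (1 - s) ^ dV V) * norm y ^ 2"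
    using insert.hyps by simp
qed

end


theorem theorem4p4:
  fixes n :: nat and E :: "nat \<Rightarrow> nat \<Rightarrow> bool"
    and T :: "nat \<Rightarrow> 'a::{real_inner, complete_space} \<Rightarrow> 'a"
  assumes sym: "\<forall>i j. E i j \<longrightarrow> E j i"
    and irrefl: "\<forall>i. \<not> E i i"
    and fam: "gamma_family n E T"
    and brehmer: "weak_brehmer n E T"
  shows "\<forall>r::real. 0 \<le> r \<and> r < 1 \<longrightarrow>
           (\<forall>h. (\<lambda>p. (norm (cauchy_transform r T h p))\<^sup>2) summable_on raam n E) \<and>
           (\<forall>p\<in>raam n E. linear (\<lambda>h. cauchy_transform r T h p)) \<and>
           (\<forall>h. (\<Sum>\<^sub>\<infinity>p\<in>raam n E. (norm (cauchy_transform r T h p))\<^sup>2)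
                  \<le> (norm h)\<^sup>2 / (1 - r\<^sup>2) ^ clique_number n E)"
proof (intro allI impI)
  fix r :: real assume r: "0 \<le> r \<and> r < 1"
  interpret G: gfam E n T
  proof unfold_locales
    show "\<And>i j. E i j \<Longrightarrow> E j i" using sym by blast
    show "\<And>i. \<not> E i i" using irrefl by blast
    show "gamma_family n E T" by (rule fam)
  qed
  define s where "s = r^2"
  have rr: "r * r \<le> r" using r by (simp add: mult_left_le_one_le)
  have s: "0 \<le> s" "s < 1" using r rr by (auto simp: s_def power2_eq_square)
  define K where "K = (\<Prod>V\<in>G.CC. 1 / (1 - s) ^ G.dV V)"
  have raam: "raam n E = G.CS {1..n}"
    by (simp add: raam_def G.CS_def G.cls_def[abs_def])
  have trm: "(norm (cauchy_transform r T h p))^2 = s ^ mlen p * norm (G.Aop p h)^2" for h p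
  proof -
    have "(r ^ mlen p)^2 = (r^2) ^ mlen p" by (simp add: power_mult[symmetric] mult.commute)
    then show ?thesis
      unfolding cauchy_transform_def G.Aop_def s_def using r
      by (simp add: power_mult_distrib)
  qed
  have bound: "(\<Sum>p\<in>F. (norm (cauchy_transform r T h p))^2) \<le> K * norm h ^ 2"
    if F: "finite F" "F \<subseteq> raam n E" for F h
  proof -
    have "F \<subseteq> G.CS (\<Union>G.CC)" using F raam G.CC_Union by simp
    from G.assembly[OF brehmer s G.CC_finite subset_refl F(1) this, of h]
    show ?thesis unfolding trm K_def .
  qed
  have K_le: "K \<le> 1 / (1 - s) ^ clique_number n E"
  proof -
    have b1: "1 \<le> 1 / (1 - s)" using s by simp
    have "K = (1 / (1 - s)) ^ (\<Sum>V\<in>G.CC. G.dV V)"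
      unfolding K_def power_sum by (simp add: power_one_over)
    also have "\<dots> \<le> (1 / (1 - s)) ^ clique_number n E"
      using G.sum_dV b1 by (rule power_increasing)
    finally show ?thesis by (simp add: power_one_over)
  qed
  have nonneg: "0 \<le> (norm (cauchy_transform r T h p))^2" for h p by simp
  have summ: "(\<lambda>p. (norm (cauchy_transform r T h p))\<^sup>2) summable_on raam n E" for h
  proof (rule nonneg_bdd_above_summable_on)
    show "\<And>x. x \<in> raam n E \<Longrightarrow> 0 \<le> (norm (cauchy_transform r T h x))\<^sup>2" by simp
    show "bdd_above (sum (\<lambda>p. (norm (cauchy_transform r T h p))\<^sup>2) ` {F. F \<subseteq> raam n E \<and> finite F})"
      by (rule bdd_aboveI[of _ "K * norm h ^ 2"]) (use bound in auto)
  qed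
  show "(\<forall>h. (\<lambda>p. (norm (cauchy_transform r T h p))\<^sup>2) summable_on raam n E) \<and>
           (\<forall>p\<in>raam n E. linear (\<lambda>h. cauchy_transform r T h p)) \<and>
           (\<forall>h. (\<Sum>\<^sub>\<infinity>p\<in>raam n E. (norm (cauchy_transform r T h p))\<^sup>2)
                  \<le> (norm h)\<^sup>2 / (1 - r\<^sup>2) ^ clique_number n E)"
  proof (intro conjI allI ballI)
    fix h show "(\<lambda>p. (norm (cauchy_transform r T h p))\<^sup>2) summable_on raam n E" by (rule summ)
  next
    fix p assume p: "p \<in> raam n E"
    then have "bounded_linear (mon_op T p)" using raam G.bl_mon[of p "{1..n}"] by simp
    then have l: "linear (adjoint (mon_op T p))" by (rule adjoint_linear_gen)
    show "linear (\<lambda>h. cauchy_transform r T h p)"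
      unfolding cauchy_transform_def
      by (rule linearI) (simp_all add: linear_add[OF l] linear_scale[OF l] scaleR_add_right)
  next
    fix h
    have "(\<Sum>\<^sub>\<infinity>p\<in>raam n E. (norm (cauchy_transform r T h p))\<^sup>2) \<le> K * norm h ^ 2"
      by (rule infsum_le_finite_sums[OF summ]) (rule bound)
    also have "\<dots> \<le> 1 / (1 - s) ^ clique_number n E * norm h ^ 2"
      using K_le by (rule mult_right_mono) simp
    finally show "(\<Sum>\<^sub>\<infinity>p\<in>raam n E. (norm (cauchy_transform r T h p))\<^sup>2)
                  \<le> (norm h)\<^sup>2 / (1 - r\<^sup>2) ^ clique_number n E"
      by (simp add: s_def)
  qed
qed


end
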